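(* Fix generic values of the parameters $h_1,h_2,u_1,\dots,u_8$, of $z$, and of the three numbers $Y(z/q),Y(z),Y(qz)$. Put $$F(f,g)=\varphi(f,g)\,\{f-f(z/q)\}\{f-f(z)\}\,L_1 ,$$ regarded as a function of $(f,g)$, with $L_1$ as in the context. Then $F$ is a polynomial in $(f,g)$ and the algebraic curve $F=0$ in $\mathbb{P}^1\times\mathbb{P}^1$ has the following properties: (i) it is of bidegree $(3,2)$ in $(f,g)$; (ii) it passes through the 12 points $P_1,\dots,P_8$, $P(z)$, $P(h_1q/z)$, $Q(z)$, $Q(z/q)$. Here $Q(u)=(f,g)$ denotes the point with $f=f(u)$ and $g$ determined by $\dfrac{g-g(u)}{g-g(h_1/u)}=\dfrac{Y(qu)}{Y(u)}$, for $u=z$ and $u=z/q$. Moreover, these two conditions determine the curve $F=0$ uniquely.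
   Context: Let $h_1,h_2,u_1,\dots,u_8$ be generic nonzero complex parameters and $q=h_1^2h_2^2/(u_1\cdots u_8)$. Put $f(u)=u+h_1/u$, $g(u)=u+h_2/u$, $\bar f(u)=u+\frac{h_1}{qu}$, $\bar g(u)=u+\frac{h_2q}{u}$, $P(u)=(f(u),g(u))\in\mathbb{P}^1\times\mathbb{P}^1$ and $P_i=P(u_i)$. Let $\varphi(f,g)=(f-g)\big(\frac{f}{h_1}-\frac{g}{h_2}\big)-(h_1-h_2)\big(\frac1{h_1}-\frac1{h_2}\big)$. Let $U(z)=\prod_{i=1}^8(z-u_i)=\sum_{i=0}^8(-1)^i m_{8-i}z^i$ (so $m_0=1$, $m_8=h_1^2h_2^2/q$). For a parameter $h$ define polynomials in $g$: $P_n(h,g)=m_0g^4-m_1g^3+(m_2-3hm_0-h^{-3}m_8)g^2+(2hm_1-m_3+h^{-2}m_7)g+(h^2m_0-hm_2+m_4-h^{-1}m_6+h^{-2}m_8)$, $P_d(h,g)=m_8g^4-hm_7g^3+(h^2m_6-3hm_8-h^5m_0)g^2+(2h^2m_7-h^3m_5+h^5m_1)g+(h^6m_0-h^5m_2+h^4m_4-h^3m_6+h^2m_8)$. (They satisfy $(z-\frac hz)P_n(h,z+\frac hz)=z^{-3}U(z)-(z/h)^3U(h/z)$ and $(z-\frac hz)P_d(h,z+\frac hz)=z^5U(h/z)-(h/z)^5U(z)$.) Define, for variables $f_0,f,g$, $V(f_0,f)=q\Big[(f_0-g)(f-g)-\big(\tfrac{h_1}{q}-h_2\big)(h_1-h_2)\tfrac1{h_2}\Big]P_d(h_2,g)-h_1^2h_2^4\Big[\big(\tfrac{f_0q}{h_1}-\tfrac{g}{h_2}\big)\big(\tfrac{f}{h_1}-\tfrac{g}{h_2}\big)-\big(\tfrac{q}{h_1}-\tfrac1{h_2}\big)\big(\tfrac1{h_1}-\tfrac1{h_2}\big)h_2\Big]P_n(h_2,g)$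 (it also depends on $g$). For a function $Y$ of $z$ and variables $(f,g)$ define $$L_1=\frac{q^5U(\frac zq)}{(z^2-h_1q^2)\{f-f(\frac zq)\}}\Big[Y(\tfrac zq)-\frac{g-g(\frac{h_1q}{z})}{g-g(\frac zq)}Y(z)\Big]+\frac{z^8U(\frac{h_1}{z})}{(z^2-h_1)h_1^4\{f-f(z)\}}\Big[Y(qz)-\frac{g-g(z)}{g-g(\frac{h_1}{z})}Y(z)\Big]+\frac{(h_1-h_2)z^2(z^2-h_1q)\,V(\bar f(\frac zq),f)}{h_1^3h_2^3q\,g\,\varphi(f,g)\{g-g(\frac{h_1}{z})\}\{g-g(\frac zq)\}}Y(z).$$ *)

theory Defs
  imports Complex_Main "HOL-Computational_Algebra.Polynomial"
begin

text \<open>Parameters: h1, h2 and u 1, ..., u 8 (the values u i for other i are irrelevant).\<close>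

definition qpar :: "complex \<Rightarrow> complex \<Rightarrow> (nat \<Rightarrow> complex) \<Rightarrow> complex" where
  "qpar h1 h2 u = h1^2 * h2^2 / (\<Prod>i\<in>{1..8}. u i)"

definition fP :: "complex \<Rightarrow> complex \<Rightarrow> complex" where
  "fP h1 x = x + h1 / x"

definition gP :: "complex \<Rightarrow> complex \<Rightarrow> complex" where
  "gP h2 x = x + h2 / x"

definition fbar :: "complex \<Rightarrow> complex \<Rightarrow> complex \<Rightarrow> complex" where
  "fbar h1 q x = x + h1 / (q * x)"

definition phi :: "complex \<Rightarrow> complex \<Rightarrow> complex \<Rightarrow> complex \<Rightarrow> complex" where
  "phi h1 h2 f g = (f - g) * (f / h1 - g / h2) - (h1 - h2) * (1 / h1 - 1 / h2)"

text \<open>U(z) = prod_{i=1}^8 (z - u_i) = sum_i (-1)^i m_{8-i} z^i.\<close>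
definition Upol :: "(nat \<Rightarrow> complex) \<Rightarrow> complex poly" where
  "Upol u = (\<Prod>i\<in>{1..8}. [:- u i, 1:])"

definition Uf :: "(nat \<Rightarrow> complex) \<Rightarrow> complex \<Rightarrow> complex" where
  "Uf u w = poly (Upol u) w"

definition msym :: "(nat \<Rightarrow> complex) \<Rightarrow> nat \<Rightarrow> complex" where
  "msym u k = (-1) ^ (8 - k) * coeff (Upol u) (8 - k)"

definition Pn :: "(nat \<Rightarrow> complex) \<Rightarrow> complex \<Rightarrow> complex \<Rightarrow> complex" where
  "Pn m h g = m 0 * g^4 - m 1 * g^3
     + (m 2 - 3 * h * m 0 - m 8 / h^3) * g^2
     + (2 * h * m 1 - m 3 + m 7 / h^2) * g
     + (h^2 * m 0 - h * m 2 + m 4 - m 6 / h + m 8 / h^2)"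

definition Pd :: "(nat \<Rightarrow> complex) \<Rightarrow> complex \<Rightarrow> complex \<Rightarrow> complex" where
  "Pd m h g = m 8 * g^4 - h * m 7 * g^3
     + (h^2 * m 6 - 3 * h * m 8 - h^5 * m 0) * g^2
     + (2 * h^2 * m 7 - h^3 * m 5 + h^5 * m 1) * g
     + (h^6 * m 0 - h^5 * m 2 + h^4 * m 4 - h^3 * m 6 + h^2 * m 8)"

definition Vfun :: "complex \<Rightarrow> complex \<Rightarrow> (nat \<Rightarrow> complex) \<Rightarrow> complex \<Rightarrow> complex \<Rightarrow> complex \<Rightarrow> complex" where
  "Vfun h1 h2 u f0 f g =
    (let q = qpar h1 h2 u; m = msym u in
     q * ((f0 - g) * (f - g) - (h1 / q - h2) * (h1 - h2) * (1 / h2)) * Pd m h2 g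
     - h1^2 * h2^4 * ((f0 * q / h1 - g / h2) * (f / h1 - g / h2)
                      - (q / h1 - 1 / h2) * (1 / h1 - 1 / h2) * h2) * Pn m h2 g)"

text \<open>L_1, where y0 = Y(z/q), y1 = Y(z), y2 = Y(qz).\<close>
definition L1 :: "complex \<Rightarrow> complex \<Rightarrow> (nat \<Rightarrow> complex) \<Rightarrow> complex \<Rightarrow> complex \<Rightarrow> complex \<Rightarrow> complex
    \<Rightarrow> complex \<Rightarrow> complex \<Rightarrow> complex" where
  "L1 h1 h2 u z y0 y1 y2 f g =
    (let q = qpar h1 h2 u in
     q^5 * Uf u (z / q) / ((z^2 - h1 * q^2) * (f - fP h1 (z / q)))
       * (y0 - (g - gP h2 (h1 * q / z)) / (g - gP h2 (z / q)) * y1)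
     + z^8 * Uf u (h1 / z) / ((z^2 - h1) * h1^4 * (f - fP h1 z))
       * (y2 - (g - gP h2 z) / (g - gP h2 (h1 / z)) * y1)
     + (h1 - h2) * z^2 * (z^2 - h1 * q) * Vfun h1 h2 u (fbar h1 q (z / q)) f g
       / (h1^3 * h2^3 * q * g * phi h1 h2 f g * (g - gP h2 (h1 / z)) * (g - gP h2 (z / q)))
       * y1)"

definition Fcurve :: "complex \<Rightarrow> complex \<Rightarrow> (nat \<Rightarrow> complex) \<Rightarrow> complex \<Rightarrow> complex \<Rightarrow> complex \<Rightarrow> complex
    \<Rightarrow> complex \<Rightarrow> complex \<Rightarrow> complex" where
  "Fcurve h1 h2 u z y0 y1 y2 f g =
    phi h1 h2 f g * (f - fP h1 (z / qpar h1 h2 u)) * (f - fP h1 z) * L1 h1 h2 u z y0 y1 y2 f g"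

definition bipoly :: "(nat \<Rightarrow> nat \<Rightarrow> complex) \<Rightarrow> complex \<Rightarrow> complex \<Rightarrow> complex" where
  "bipoly c f g = (\<Sum>i\<le>3. \<Sum>j\<le>2. c i j * f^i * g^j)"

definition in_box32 :: "(nat \<Rightarrow> nat \<Rightarrow> complex) \<Rightarrow> bool" where
  "in_box32 c \<longleftrightarrow> (\<forall>i j. 3 < i \<or> 2 < j \<longrightarrow> c i j = 0)"

definition through12 :: "complex \<Rightarrow> complex \<Rightarrow> (nat \<Rightarrow> complex) \<Rightarrow> complex \<Rightarrow> complex \<Rightarrow> complex \<Rightarrow> complex
    \<Rightarrow> (nat \<Rightarrow> nat \<Rightarrow> complex) \<Rightarrow> bool" where
  "through12 h1 h2 u z y0 y1 y2 c \<longleftrightarrow>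
    (let q = qpar h1 h2 u in
     (\<forall>i\<in>{1..8}. bipoly c (fP h1 (u i)) (gP h2 (u i)) = 0)
     \<and> bipoly c (fP h1 z) (gP h2 z) = 0
     \<and> bipoly c (fP h1 (h1 * q / z)) (gP h2 (h1 * q / z)) = 0
     \<and> (\<forall>g. (g - gP h2 z) / (g - gP h2 (h1 / z)) = y2 / y1
            \<longrightarrow> bipoly c (fP h1 z) g = 0)
     \<and> (\<forall>g. (g - gP h2 (z / q)) / (g - gP h2 (h1 / (z / q))) = y1 / y0
            \<longrightarrow> bipoly c (fP h1 (z / q)) g = 0))"

text \<open>Polynomial functions of the first n coordinates (used to express genericity:
  a property holds generically if it holds outside the zero set of a polynomial
  function that is not identically zero).\<close>
inductive polyfun :: "nat \<Rightarrow> ((nat \<Rightarrow> complex) \<Rightarrow> complex) \<Rightarrow> bool" for n where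
  pf_const: "polyfun n (\<lambda>x. c)"
| pf_var: "i < n \<Longrightarrow> polyfun n (\<lambda>x. x i)"
| pf_add: "polyfun n p \<Longrightarrow> polyfun n r \<Longrightarrow> polyfun n (\<lambda>x. p x + r x)"
| pf_mult: "polyfun n p \<Longrightarrow> polyfun n r \<Longrightarrow> polyfun n (\<lambda>x. p x * r x)"

definition param_vec :: "complex \<Rightarrow> complex \<Rightarrow> (nat \<Rightarrow> complex) \<Rightarrow> complex \<Rightarrow> complex \<Rightarrow> complex \<Rightarrow> complex
    \<Rightarrow> nat \<Rightarrow> complex" where
  "param_vec h1 h2 u z y0 y1 y2 i =
    (if i = 0 then h1 else if i = 1 then h2 else if i \<le> 9 then u (i - 1)
     else if i = 10 then z else if i = 11 then y0 else if i = 12 then y1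
     else if i = 13 then y2 else 0)"

end

theory Submission
  imports Defs
begin

type_synonym bp = "complex poly poly"

definition ev :: "bp \<Rightarrow> complex \<Rightarrow> complex \<Rightarrow> complex" where
  "ev P f g = poly (poly P [:f:]) g"
definition FV :: bp where "FV = [:0, 1:]"
definition GV :: bp where "GV = [:[:0, 1:]:]"
definition CC :: "complex \<Rightarrow> bp" where "CC k = [:[:k:]:]"

lemma ev_add[simp]: "ev (P + Q) f g = ev P f g + ev Q f g" by (simp add: ev_def)
lemma ev_diff[simp]: "ev (P - Q) f g = ev P f g - ev Q f g" by (simp add: ev_def)
lemma ev_minus[simp]: "ev (- P) f g = - ev P f g" by (simp add: ev_def)
lemma ev_mult[simp]: "ev (P * Q) f g = ev P f g * ev Q f g" by (simp add: ev_def)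
lemma ev_pow[simp]: "ev (P ^ n) f g = ev P f g ^ n" by (induct n) (simp_all add: ev_def)
lemma ev_FV[simp]: "ev FV f g = f" by (simp add: ev_def FV_def)
lemma ev_GV[simp]: "ev GV f g = g" by (simp add: ev_def GV_def)
lemma ev_CC[simp]: "ev (CC k) f g = k" by (simp add: ev_def CC_def)

definition bd :: "bp \<Rightarrow> nat \<Rightarrow> nat \<Rightarrow> bool" where
  "bd P a b \<longleftrightarrow> degree P \<le> a \<and> (\<forall>i. degree (coeff P i) \<le> b)"

lemma bd_add: "bd P a b \<Longrightarrow> bd Q a b \<Longrightarrow> bd (P + Q) a b"
  unfolding bd_def by (auto intro: order.trans[OF degree_add_le])
lemma bd_diff: "bd P a b \<Longrightarrow> bd Q a b \<Longrightarrow> bd (P - Q) a b"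
  unfolding bd_def by (auto intro: order.trans[OF degree_diff_le])
lemma bd_minus: "bd P a b \<Longrightarrow> bd (- P) a b"
  unfolding bd_def by auto
lemma bd_mono: "bd P a b \<Longrightarrow> a \<le> a' \<Longrightarrow> b \<le> b' \<Longrightarrow> bd P a' b'"
  unfolding bd_def by (meson order.trans)
lemma bd_mult: "bd P a b \<Longrightarrow> bd Q c d \<Longrightarrow> bd (P * Q) (a + c) (b + d)"
  unfolding bd_def
proof (intro conjI allI)
  assume A: "degree P \<le> a \<and> (\<forall>i. degree (coeff P i) \<le> b)"
     and B: "degree Q \<le> c \<and> (\<forall>i. degree (coeff Q i) \<le> d)"
  show "degree (P * Q) \<le> a + c"
    using A B by (meson add_mono degree_mult_le order.trans)
  fix n
  show "degree (coeff (P * Q) n) \<le> b + d"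
    unfolding coeff_mult
    by (rule degree_sum_le) (use A B in \<open>auto intro: order.trans[OF degree_mult_le] add_mono\<close>)
qed
lemma bd_FV: "bd FV 1 0" by (simp add: bd_def FV_def coeff_pCons split: nat.split)
lemma bd_GV: "bd GV 0 1" by (simp add: bd_def GV_def coeff_pCons split: nat.split)
lemma bd_CC: "bd (CC k) 0 0" by (simp add: bd_def CC_def coeff_pCons split: nat.split)
lemma bd_one: "bd 1 0 0" by (simp add: bd_def coeff_pCons one_pCons split: nat.split)
lemma bd_pow: "bd P a b \<Longrightarrow> bd (P ^ n) (n * a) (n * b)"
  by (induct n) (auto simp: bd_one dest: bd_mult[of P a b])

lemma coeff_mult_top:
  fixes p q :: "'a::comm_semiring_0 poly"
  assumes "degree p \<le> a" "degree q \<le> c"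
  shows "coeff (p * q) (a + c) = coeff p a * coeff q c"
proof -
  have "coeff (p * q) (a + c) = (\<Sum>i\<le>a + c. coeff p i * coeff q (a + c - i))"
    by (rule coeff_mult)
  also have "\<dots> = (\<Sum>i\<le>a + c. if i = a then coeff p a * coeff q c else 0)"
  proof (rule sum.cong[OF refl])
    fix i assume "i \<in> {..a+c}"
    show "coeff p i * coeff q (a + c - i) = (if i = a then coeff p a * coeff q c else 0)"
    proof (cases "i = a")
      case False
      then show ?thesis
      proof (cases "i < a")
        case True
        then have "degree q < a + c - i" using assms by linarith
        then show ?thesis using False by (simp add: coeff_eq_0)
      next
        case False2: False
        then have "degree p < i" using assms \<open>i \<noteq> a\<close> by linarith
        then show ?thesis using \<open>i\<noteq>a\<close> by (simp add: coeff_eq_0)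
      qed
    qed simp
  qed
  also have "\<dots> = coeff p a * coeff q c" by simp
  finally show ?thesis .
qed

lemma top_mult:
  assumes "bd P a b" "bd Q c d"
  shows "coeff (coeff (P * Q) (a + c)) (b + d) = coeff (coeff P a) b * coeff (coeff Q c) d"
  using assms unfolding bd_def by (simp add: coeff_mult_top)

lemma ev_map: "ev P f r = poly (map_poly (\<lambda>p. poly p r) P) f"
  unfolding ev_def
  by (induct P) (simp_all add: map_poly_pCons)

lemma ev_root_coeff:
  assumes "\<forall>f. ev P f r = 0"
  shows "poly (coeff P i) r = 0"
proof -
  have "map_poly (\<lambda>p. poly p r) P = 0"
    using assms by (simp add: ev_map poly_all_0_iff_0[symmetric])
  then have "coeff (map_poly (\<lambda>p. poly p r) P) i = 0" by simp
  then show ?thesis by (simp add: coeff_map_poly)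
qed

lemma dvd3:
  fixes p :: "complex poly"
  assumes "poly p r1 = 0" "poly p r2 = 0" "poly p r3 = 0"
    "r1 \<noteq> r2" "r1 \<noteq> r3" "r2 \<noteq> r3"
  shows "[:-r1,1:] * [:-r2,1:] * [:-r3,1:] dvd p"
proof -
  obtain p1 where p1: "p = [:-r1,1:] * p1" using assms(1) by (auto simp: poly_eq_0_iff_dvd)
  have "poly p1 r2 = 0" "poly p1 r3 = 0" using assms p1 by auto
  then obtain p2 where p2: "p1 = [:-r2,1:] * p2" by (auto simp: poly_eq_0_iff_dvd)
  have "poly p2 r3 = 0" using \<open>poly p1 r3 = 0\<close> assms p2 by auto
  then obtain p3 where p3: "p2 = [:-r3,1:] * p3" by (auto simp: poly_eq_0_iff_dvd)
  have "p = ([:-r1,1:] * [:-r2,1:] * [:-r3,1:]) * p3" using p1 p2 p3 by (simp only: mult.assoc)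
  then show ?thesis by (rule dvdI)
qed

lemma poly_le_sum:
  fixes p :: "'a::comm_semiring_1 poly"
  assumes "degree p \<le> n"
  shows "poly p x = (\<Sum>i\<le>n. coeff p i * x ^ i)"
  unfolding poly_altdef
  by (rule sum.mono_neutral_left) (use assms in \<open>auto simp: coeff_eq_0\<close>)

definition cf :: "bp \<Rightarrow> nat \<Rightarrow> nat \<Rightarrow> complex" where
  "cf T i j = (if i \<le> 3 \<and> j \<le> 2 then coeff (coeff T i) j else 0)"

lemma in_box_cf: "in_box32 (cf T)" by (simp add: in_box32_def cf_def)

lemma bipoly_cf:
  assumes "bd T 3 2"
  shows "bipoly (cf T) f g = ev T f g"
proof -
  have "ev T f g = poly (\<Sum>i\<le>3. coeff T i * [:f:] ^ i) g"
    unfolding ev_def using assms by (simp add: bd_def poly_le_sum[of T 3])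
  also have "\<dots> = (\<Sum>i\<le>3. poly (coeff T i) g * f ^ i)"
    by (simp add: poly_sum)
  also have "\<dots> = (\<Sum>i\<le>3. (\<Sum>j\<le>2. coeff (coeff T i) j * g ^ j) * f ^ i)"
    using assms by (simp add: bd_def poly_le_sum[of "coeff T _" 2])
  also have "\<dots> = bipoly (cf T) f g"
    unfolding bipoly_def cf_def by (simp add: sum_distrib_right sum_distrib_left mult_ac)
  finally show ?thesis by simp
qed

definition Xf :: "complex \<Rightarrow> complex \<Rightarrow> complex \<Rightarrow> complex \<Rightarrow> complex \<Rightarrow> complex \<Rightarrow> complex" where
  "Xf h1 h2 q f0 f g = q*((f0 - g)*(f - g) - (h1/q - h2)*(h1-h2)*(1/h2))"
definition Yf :: "complex \<Rightarrow> complex \<Rightarrow> complex \<Rightarrow> complex \<Rightarrow> complex \<Rightarrow> complex \<Rightarrow> complex" where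
  "Yf h1 h2 q f0 f g = h1^2*h2^4*((f0*q/h1 - g/h2)*(f/h1 - g/h2) - (q/h1 - 1/h2)*(1/h1 - 1/h2)*h2)"

lemma XY_curve:
  assumes "t \<noteq> 0" "h1 \<noteq> 0" "h2 \<noteq> 0" "q \<noteq> 0"
  shows "Xf h1 h2 q f0 (t + h1/t) (t + h2/t) * t^2 * h2^3 + Yf h1 h2 q f0 (t + h1/t) (t + h2/t) = 0"
  using assms unfolding Xf_def Yf_def by (simp add: field_simps) algebra

lemma XY_g:
  assumes "t \<noteq> 0" "h1 \<noteq> 0" "h2 \<noteq> 0" "q \<noteq> 0"
  shows "Xf h1 h2 q (t + h1/(q*t)) f (t + h2/t) * t^2 * h2^3 + Yf h1 h2 q (t + h1/(q*t)) f (t + h2/t) = 0"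
  using assms unfolding Xf_def Yf_def by (simp add: field_simps) algebra

lemma XY_g2:
  assumes "t \<noteq> 0" "h1 \<noteq> 0" "h2 \<noteq> 0" "q \<noteq> 0"
  shows "- Xf h1 h2 q (t + h1/(q*t)) f (t + h2/t) * (h2/t)^5 - Yf h1 h2 q (t + h1/(q*t)) f (t + h2/t) / t^3
     = (h1 - q*h2)*h2^3*(t^4 - h2^2)*(f - (h2/t + h1*t/h2))/t^6"
  using assms unfolding Xf_def Yf_def by (simp add: field_simps) algebra

lemma scalA0:
  fixes t h1 h2 q :: complex
  assumes "t \<noteq> 0" "h1 \<noteq> 0" "h2 \<noteq> 0" "q \<noteq> 0" "t^2 - h1 \<noteq> 0"
  shows "(h1-h2)*(q*t)^2*((q*t)^2-h1*q)/(h1^3*h2^3*q) * (h1 - q*h2)*h2^3*(t^4-h2^2)/t^6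
    = (t - h2/t) * q^5 * (t + h2/t) * ((t + h2/t) - (h1/(t*q) + h2*t*q/h1)) * ((t + h2/t) - (h1/t + h2*t/h1))
       / (h1*(q^2*(t^2-h1)))"
  using assms by (simp add: field_simps; algebra)

lemma scalB0:
  fixes t h1 h2 q :: complex
  assumes "t \<noteq> 0" "h1 \<noteq> 0" "h2 \<noteq> 0" "q \<noteq> 0" "h1 - t^2 \<noteq> 0"
  shows "(h1-h2)*(h1/t)^2*((h1/t)^2-h1*q)/(h1^3*h2^3*q) * (h1 - q*h2)*h2^3*(t^4-h2^2)/t^6
    = (t - h2/t) * ((h1/t)^8/((h1*(h1 - t^2)/t^2)*h1^4)) * (t + h2/t) * ((t + h2/t) - (h1/(t*q) + h2*t*q/h1)) * ((t + h2/t) - (h1/t + h2*t/h1))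
       / h1"
  using assms by (simp add: field_simps; algebra)

lemma phi_fact:
  assumes "t \<noteq> 0" "h1 \<noteq> 0" "h2 \<noteq> 0"
  shows "phi h1 h2 f (t + h2/t) = (f - (t + h1/t)) * (f - (h2/t + h1*t/h2)) / h1"
  using assms unfolding phi_def by (simp add: field_simps; algebra)

definition Ue :: "(nat \<Rightarrow> complex) \<Rightarrow> complex \<Rightarrow> complex" where
 "Ue m w = m 0*w^8 - m 1*w^7 + m 2*w^6 - m 3*w^5 + m 4*w^4 - m 5*w^3 + m 6*w^2 - m 7*w + m 8"

lemma I1':
  fixes w v :: complex assumes "w\<noteq>0" "v\<noteq>0"
  shows "(w - v) * Pn m (w*v) (w + v) * (w^3*v^3) = Ue m w * v^3 - w^3 * Ue m v"
  using assms unfolding Pn_def Ue_def by (simp add: field_simps; algebra)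

lemma I2':
  fixes w v :: complex
  shows "(w - v) * Pd m (w*v) (w + v) = w^5 * Ue m v - v^5 * Ue m w"
  unfolding Pd_def Ue_def by algebra

lemma Upol_deg: "degree (Upol u) = 8"
proof -
  have "degree (Upol u) = (\<Sum>i\<in>{1..8::nat}. degree [:- u i, 1:])"
    unfolding Upol_def by (rule degree_prod_eq_sum_degree) auto
  then show ?thesis by simp
qed

lemma Upol_lead: "coeff (Upol u) 8 = 1"
proof -
  have "lead_coeff (Upol u) = 1"
    unfolding Upol_def lead_coeff_prod by simp
  then show ?thesis using Upol_deg[of u] by simp
qed

lemma Upol_c0: "coeff (Upol u) 0 = (\<Prod>i\<in>{1..8}. u i)"
proof -
  have "coeff (Upol u) 0 = poly (Upol u) 0" by (simp add: poly_0_coeff_0)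
  also have "\<dots> = (\<Prod>i\<in>{1..8::nat}. - u i)" unfolding Upol_def poly_prod by simp
  also have "\<dots> = (\<Prod>i\<in>{1..8::nat}. (-1) * u i)" by simp
  also have "\<dots> = (-1)^8 * (\<Prod>i\<in>{1..8::nat}. u i)"
    by (simp only: prod.distrib prod_constant) simp
  finally show ?thesis by simp
qed

lemma msym0: "msym u 0 = 1"
  by (simp add: msym_def Upol_lead)

lemma msym8: "msym u 8 = (\<Prod>i\<in>{1..8}. u i)"
  by (simp add: msym_def Upol_c0)

lemma Uf_Ue: "Uf u w = Ue (msym u) w"
proof -
  have "Uf u w = (\<Sum>i\<le>8. coeff (Upol u) i * w ^ i)"
    unfolding Uf_def by (rule poly_le_sum) (simp add: Upol_deg)
  also have "\<dots> = Ue (msym u) w"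
    by (simp add: Ue_def msym_def eval_nat_numeral algebra_simps)
  finally show ?thesis .
qed

lemma lin2:
  fixes al be g1 g2 :: complex
  assumes "al*g1 + be = 0" "al*g2 + be = 0" "g1 \<noteq> g2"
  shows "al = 0 \<and> be = 0"
proof -
  have "al*(g1 - g2) = (al*g1 + be) - (al*g2 + be)" by algebra
  then have "al*(g1 - g2) = 0" using assms by simp
  then have "al = 0" using assms(3) by simp
  then show ?thesis using assms by simp
qed

lemma cofin_zero:
  fixes p :: "complex poly"
  assumes "finite S" "\<forall>x. x \<notin> S \<longrightarrow> poly p x = 0"
  shows "p = 0"
proof (rule ccontr)
  assume "p \<noteq> 0"
  then have "finite {x. poly p x = 0}" by (rule poly_roots_finite)
  then have "finite (S \<union> {x. poly p x = 0})" using assms(1) by simp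
  moreover have "S \<union> {x. poly p x = 0} = UNIV" using assms(2) by auto
  ultimately show False using infinite_UNIV_char_0[where 'a=complex] by simp
qed

lemma finite_sq: "finite {f::complex. f^2 = c}"
proof -
  have "{f::complex. f^2 = c} = {x. poly [:-c,0,1:] x = 0}" by (auto simp: power2_eq_square)
  moreover have "[:-c,0,1:] \<noteq> (0::complex poly)" by simp
  ultimately show ?thesis using poly_roots_finite by metis
qed

definition Ek :: "(nat \<Rightarrow> nat \<Rightarrow> complex) \<Rightarrow> nat \<Rightarrow> complex \<Rightarrow> complex" where
  "Ek e k f = (\<Sum>i\<le>3. e i k * f^i)"

lemma sum3: "(\<Sum>i\<le>3::nat. X i) = X 0 + X 1 + X 2 + (X 3 :: complex)"
  by (simp add: eval_nat_numeral atMost_Suc add_ac)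
lemma sum2: "(\<Sum>i\<le>2::nat. X i) = X 0 + X 1 + (X 2 :: complex)"
  by (simp add: eval_nat_numeral atMost_Suc add_ac)

lemma bipoly_expand: "bipoly e f g = Ek e 0 f + Ek e 1 f * g + Ek e 2 f * g^2"
  unfolding bipoly_def Ek_def
  by (simp add: sum2 sum3 algebra_simps)

lemma Ek_poly: "Ek e k f = poly [:e 0 k, e 1 k, e 2 k, e 3 k:] f"
  unfolding Ek_def sum3 by (simp add: algebra_simps power2_eq_square power3_eq_cube)

lemma phi_expand: "phi h1 h2 f g = (1/h2)*g^2 - (f/h1 + f/h2)*g + (f^2/h1 - (h1-h2)*(1/h1-1/h2))"
  unfolding phi_def by (simp only: divide_inverse; algebra)

lemma phi_roots_g:
  assumes "t \<noteq> 0" "h1 \<noteq> 0" "h2 \<noteq> 0"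
  shows "phi h1 h2 (fP h1 t) g = (g - gP h2 t)*(g - gP h2 (h1/t))/h2"
  using assms unfolding phi_def fP_def gP_def by (simp add: field_simps; algebra)

lemma pow5:
  fixes t X Y :: complex
  assumes "t \<noteq> 0" "i + j \<le> 5"
  shows "t^5 * ((X/t)^i * (Y/t)^j) = X^i * Y^j * t^(5-i-j)"
proof -
  have "t^5 = t^i * t^j * t^(5-i-j)" using assms(2) by (simp flip: power_add)
  then show ?thesis using assms(1) by (simp add: power_divide field_simps)
qed

definition upol :: "complex \<Rightarrow> complex \<Rightarrow> (nat \<Rightarrow> nat \<Rightarrow> complex) \<Rightarrow> complex poly" where
  "upol h1 h2 e = (\<Sum>i\<le>3. \<Sum>j\<le>2. smult (e i j) ([:h1,0,1:]^i * [:h2,0,1:]^j * monom 1 (5-i-j)))"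

lemma poly_upol:
  assumes t: "t \<noteq> 0"
  shows "poly (upol h1 h2 e) t = t^5 * bipoly e (fP h1 t) (gP h2 t)"
proof -
  have f: "fP h1 t = (t^2 + h1)/t" "gP h2 t = (t^2+h2)/t" using t
    by (simp_all add: fP_def gP_def field_simps power2_eq_square)
  have "poly (upol h1 h2 e) t = (\<Sum>i\<le>3. \<Sum>j\<le>2. e i j * ((t^2+h1)^i * (t^2+h2)^j * t^(5-i-j)))"
    unfolding upol_def by (simp add: poly_sum poly_monom power2_eq_square algebra_simps)
  also have "\<dots> = (\<Sum>i\<le>3. \<Sum>j\<le>2. t^5 * (e i j * (fP h1 t)^i * (gP h2 t)^j))"
  proof (intro sum.cong refl)
    fix i j assume "i \<in> {..3::nat}" "j \<in> {..2::nat}"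
    then have "i + j \<le> 5" by simp
    from pow5[OF t this, of "t^2+h1" "t^2+h2"] show
      "e i j * ((t^2+h1)^i * (t^2+h2)^j * t^(5-i-j)) = t^5 * (e i j * (fP h1 t)^i * (gP h2 t)^j)"
      unfolding f by (simp add: algebra_simps)
  qed
  also have "\<dots> = t^5 * bipoly e (fP h1 t) (gP h2 t)"
    unfolding bipoly_def by (simp add: sum_distrib_left)
  finally show ?thesis .
qed

lemma degree_upol:
  assumes "e 3 2 = 0"
  shows "degree (upol h1 h2 e) \<le> 9"
  unfolding upol_def
proof (intro degree_sum_le finite_atMost)
  fix i j assume i: "i \<in> {..3::nat}" and j: "j \<in> {..2::nat}"
  show "degree (smult (e i j) ([:h1,0,1:]^i * [:h2,0,1:]^j * monom 1 (5-i-j))) \<le> 9"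
  proof (cases "i = 3 \<and> j = 2")
    case True then show ?thesis using assms by simp
  next
    case False
    then have ij: "i + j \<le> 4" using i j by auto
    have "degree ([:h1,0,1:]^i * [:h2,0,1:]^j * monom (1::complex) (5-i-j))
        \<le> degree ([:h1,0,1:]^i) + degree ([:h2,0,1:]^j) + degree (monom (1::complex) (5-i-j))"
      by (meson add_mono degree_mult_le order.trans order_refl)
    also have "\<dots> \<le> 2*i + 2*j + (5-i-j)"
    proof -
      have "degree ([:h1,0,1:]^i) \<le> 2*i"
        using degree_power_le[of "[:h1,0,1:]" i] by (simp add: mult.commute)
      moreover have "degree ([:h2,0,1:]^j) \<le> 2*j"
        using degree_power_le[of "[:h2,0,1:]" j] by (simp add: mult.commute)
      moreover have "degree (monom (1::complex) (5-i-j)) = 5-i-j" by (simp add: degree_monom_eq)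
      ultimately show ?thesis by linarith
    qed
    also have "\<dots> \<le> 9" using ij by linarith
    finally show ?thesis using degree_smult_le order.trans by blast
  qed
qed

lemma bd_FV': "1 \<le> a \<Longrightarrow> bd FV a b" using bd_mono[OF bd_FV] by simp
lemma bd_GV': "1 \<le> b \<Longrightarrow> bd GV a b" using bd_mono[OF bd_GV] by simp
lemma bd_CC': "bd (CC k) a b" using bd_mono[OF bd_CC] by simp
lemma bd_CCmult: "bd Q a b \<Longrightarrow> bd (CC k * Q) a b" using bd_mult[OF bd_CC, of Q a b k] by simp
lemma GV_pow: "GV ^ n = [:monom 1 n:]"
proof (induct n)
  case 0 then show ?case by (simp add: one_pCons monom_0 one_poly_def)
next
  case (Suc n)
  have x: "[:0,1:] = (monom 1 1 :: complex poly)" by (simp add: monom_Suc monom_0)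
  have "GV ^ Suc n = [:[:0,1:] * monom 1 n:]" using Suc by (simp add: GV_def)
  also have "\<dots> = [:monom 1 (Suc n):]" unfolding x mult_monom by simp
  finally show ?case .
qed
lemma bd_FVc: "bd (FV - CC c) 1 0" by (intro bd_diff bd_FV bd_CC')
lemma bd_GVc: "bd (GV - CC c) 0 1" by (intro bd_diff bd_GV bd_CC')
lemma bd_GVpow: "n \<le> b \<Longrightarrow> bd (GV^n) a b"
  unfolding GV_pow bd_def by (auto simp: coeff_pCons degree_monom_eq split: nat.split)
lemma coeff_CC_mult[simp]: "coeff (coeff (CC k * Q) i) j = k * coeff (coeff Q i) j"
  by (simp add: CC_def)
lemma bd_coeff_out: "bd P a b \<Longrightarrow> a < i \<Longrightarrow> coeff P i = 0"
  unfolding bd_def by (simp add: coeff_eq_0)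
lemma bd_coeff_in: "bd P a b \<Longrightarrow> b < j \<Longrightarrow> coeff (coeff P i) j = 0"
  unfolding bd_def by (meson coeff_eq_0 le_less_trans)
lemma top_mult': "bd P a b \<Longrightarrow> bd Q c d \<Longrightarrow> n = a + c \<Longrightarrow> k = b + d \<Longrightarrow>
   coeff (coeff (P * Q) n) k = coeff (coeff P a) b * coeff (coeff Q c) d"
  using top_mult by blast

lemmas bdI = bd_add bd_diff bd_mult bd_CCmult bd_FV' bd_GV' bd_CC' bd_GVpow

lemma phi_curve: "t \<noteq> 0 \<Longrightarrow> h1 \<noteq> 0 \<Longrightarrow> h2 \<noteq> 0 \<Longrightarrow> phi h1 h2 (fP h1 t) (gP h2 t) = 0"
  unfolding phi_def fP_def gP_def by (simp add: field_simps; algebra)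

lemma Fgen:
  fixes p g d1 d2 e1 e2 n1 n2 A B K V y0 y1 y2 :: complex
  assumes "d1 \<noteq> 0" "d2 \<noteq> 0" "g \<noteq> 0" "p \<noteq> 0" "e1 \<noteq> 0" "e2 \<noteq> 0"
  shows "p*d1*d2*(A/d1*(y0 - n1/e1*y1) + B/d2*(y2 - n2/e2*y1) + K*V/(g*p*e2*e1)*y1)
    = y0*A*p*d2 + y2*B*p*d1 + y1*((- p*d2*A*g*e2*n1 - p*d1*B*g*e1*n2 + K*d1*d2*V)/(g*e1*e2))"
  using assms by (simp add: field_simps; algebra)

lemma Qgen:
  fixes P g e1 e2 n2 y1 y2 :: complex
  assumes "g \<noteq> 0" "e1 \<noteq> 0" "e2 \<noteq> 0"
  shows "y2*P + y1*(-(P*g*e1*n2)/(g*e1*e2)) = P*(y2 - y1*n2/e2)"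
  using assms by (simp add: field_simps; algebra)

locale gen =
  fixes h1 h2 :: complex and u :: "nat \<Rightarrow> complex" and z y0 y1 y2 :: complex
  assumes h1: "h1 \<noteq> 0" and h2: "h2 \<noteq> 0" and h12: "h1 \<noteq> h2" and z0: "z \<noteq> 0"
    and y0n: "y0 \<noteq> 0" and y1n: "y1 \<noteq> 0" and y2n: "y2 \<noteq> 0" and y01: "y0 \<noteq> y1" and y12: "y1 \<noteq> y2"
    and un: "\<forall>i\<in>{1..8}. u i \<noteq> 0"
    and cq1: "qpar h1 h2 u \<noteq> 1"
    and czq2: "z^2 - h1*(qpar h1 h2 u)^2 \<noteq> 0"
    and cz1: "z^2 - h1 \<noteq> 0"
    and czq: "z^2 - h1*qpar h1 h2 u \<noteq> 0"
    and chq: "h1 - qpar h1 h2 u*h2 \<noteq> 0"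
    and cta: "(z/qpar h1 h2 u)^2 - h2 \<noteq> 0"
    and ctb: "(h1/z)^2 - h2 \<noteq> 0"
    and cal: "gP h2 (z/qpar h1 h2 u) \<noteq> 0"
    and cbe: "gP h2 (h1/z) \<noteq> 0"
    and calbe: "gP h2 (z/qpar h1 h2 u) \<noteq> gP h2 (h1/z)"
    and cde: "gP h2 z \<noteq> 0"
    and cdeal: "gP h2 z \<noteq> gP h2 (z/qpar h1 h2 u)"
    and cdebe: "gP h2 z \<noteq> gP h2 (h1/z)"
    and cga: "gP h2 (h1*qpar h1 h2 u/z) \<noteq> 0"
    and cgaal: "gP h2 (h1*qpar h1 h2 u/z) \<noteq> gP h2 (z/qpar h1 h2 u)"
    and cgabe: "gP h2 (h1*qpar h1 h2 u/z) \<noteq> gP h2 (h1/z)"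
    and cab: "fP h1 (z/qpar h1 h2 u) \<noteq> fP h1 z"
    and ca4: "(fP h1 (z/qpar h1 h2 u))^2 - 4*h1 \<noteq> 0"
    and cb4: "(fP h1 z)^2 - 4*h1 \<noteq> 0"
    and cui: "\<forall>i\<in>{1..8}. (u i)^2 - h2 \<noteq> 0 \<and> gP h2 (u i) \<noteq> 0
       \<and> gP h2 (u i) \<noteq> gP h2 (z/qpar h1 h2 u) \<and> gP h2 (u i) \<noteq> gP h2 (h1/z)
       \<and> u i \<noteq> z \<and> u i \<noteq> h1*qpar h1 h2 u/z"
    and cinj: "\<forall>i\<in>{1..8}. \<forall>j\<in>{1..8}. i \<noteq> j \<longrightarrow> u i \<noteq> u j"
    and cQ1: "(gP h2 z*y1 - gP h2 (h1/z)*y2)/(y1-y2) \<noteq> 0"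
    and cQ1a: "(gP h2 z*y1 - gP h2 (h1/z)*y2)/(y1-y2) \<noteq> gP h2 (z/qpar h1 h2 u)"
    and cQ2: "(gP h2 (z/qpar h1 h2 u)*y0 - gP h2 (h1*qpar h1 h2 u/z)*y1)/(y0-y1) \<noteq> 0"
    and cQ2b: "(gP h2 (z/qpar h1 h2 u)*y0 - gP h2 (h1*qpar h1 h2 u/z)*y1)/(y0-y1) \<noteq> gP h2 (h1/z)"
begin

definition "q = qpar h1 h2 u"
definition "m = msym u"
definition "a = fP h1 (z/q)"
definition "b = fP h1 z"
definition "f0 = fbar h1 q (z/q)"
definition "al = gP h2 (z/q)"
definition "be = gP h2 (h1/z)"
definition "ga = gP h2 (h1*q/z)"
definition "de = gP h2 z"
definition "A = q^5*Uf u (z/q)/(z^2-h1*q^2)"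
definition "B = z^8*Uf u (h1/z)/((z^2-h1)*h1^4)"
definition "K = (h1-h2)*z^2*(z^2-h1*q)/(h1^3*h2^3*q)"
definition "VV f g = Vfun h1 h2 u f0 f g"
definition "NN f g = - phi h1 h2 f g*(f-b)*A*g*(g-be)*(g-ga) - phi h1 h2 f g*(f-a)*B*g*(g-al)*(g-de)
   + K*(f-a)*(f-b)*VV f g"

lemma s0: "(\<Prod>i\<in>{1..8::nat}. u i) \<noteq> 0" using un by simp
lemma q0: "q \<noteq> 0" using s0 h1 h2 by (simp add: q_def qpar_def)
lemma qm8: "q * m 8 = h1^2*h2^2" using s0 by (simp add: q_def qpar_def m_def msym8)
lemma m0: "m 0 = 1" by (simp add: m_def msym0)

lemma V_eq: "VV f g = Xf h1 h2 q f0 f g * Pd m h2 g - Yf h1 h2 q f0 f g * Pn m h2 g"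
  unfolding VV_def Vfun_def Let_def Xf_def Yf_def q_def m_def ..

lemma V_t:
  assumes t: "t \<noteq> 0"
  shows "(t - h2/t) * VV f (t + h2/t) =
     Ue m (h2/t) * (t^3/h2^3) * (Xf h1 h2 q f0 f (t + h2/t) * t^2 * h2^3 + Yf h1 h2 q f0 f (t + h2/t))
     + Ue m t * (- Xf h1 h2 q f0 f (t + h2/t) * (h2/t)^5 - Yf h1 h2 q f0 f (t + h2/t) / t^3)"
proof -
  have tv: "t * (h2/t) = h2" using t by simp
  have v0: "h2/t \<noteq> 0" using t h2 by simp
  have e1: "(t - h2/t) * Pd m h2 (t + h2/t) = t^5 * Ue m (h2/t) - (h2/t)^5 * Ue m t"
    using I2'[of t "h2/t" m] tv by simp
  have e2: "(t - h2/t) * Pn m h2 (t + h2/t) * (t^3*(h2/t)^3) = Ue m t * (h2/t)^3 - t^3 * Ue m (h2/t)"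
    using I1'[OF t v0, of m] tv by simp
  have e2': "(t - h2/t) * Pn m h2 (t + h2/t) = Ue m t / t^3 - Ue m (h2/t) * (t^3/h2^3)"
  proof -
    have "t^3*(h2/t)^3 \<noteq> 0" using t h2 by simp
    then show ?thesis using e2 t h2 by (simp add: field_simps) (simp add: algebra_simps)?
  qed
  show ?thesis
    unfolding V_eq right_diff_distrib mult.assoc[symmetric]
    apply (subst mult.commute[of "t - h2/t" "Xf _ _ _ _ _ _"])
    apply (subst mult.commute[of "t - h2/t" "Yf _ _ _ _ _ _"])
    unfolding mult.assoc e1 e2' using t h2 by (simp add: field_simps; algebra)
qed


lemma N_al: "NN f al = 0"
proof -
  define t where "t = z/q"
  have t0: "t \<noteq> 0" using z0 q0 by (simp add: t_def)
  have zt: "z = q*t" using q0 by (simp add: t_def)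
  have al_t: "al = t + h2/t" by (simp add: al_def gP_def t_def)
  have f0_t: "f0 = t + h1/(q*t)" by (simp add: f0_def fbar_def t_def)
  have a_t: "a = t + h1/t" by (simp add: a_def fP_def t_def)
  have be_z: "be = h1/z + h2*z/h1" by (simp add: be_def gP_def)
  have be_t: "be = h1/(t*q) + h2*t*q/h1" by (simp only: be_z) (simp add: zt mult_ac)
  have ga_z: "ga = h1*q/z + h2*z/(h1*q)" by (simp add: ga_def gP_def)
  have ga_t: "ga = h1/t + h2*t/h1" using q0 t0 h1 by (simp only: ga_z) (simp add: zt field_simps)
  have th: "t^2 - h1 \<noteq> 0"
  proof
    assume "t^2 - h1 = 0"
    then have "z^2 - h1*q^2 = 0" using zt by (simp add: power_mult_distrib algebra_simps)
    then show False using czq2 by (simp add: q_def)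
  qed
  have tv: "t - h2/t \<noteq> 0"
  proof
    assume "t - h2/t = 0"
    then have "t^2 - h2 = 0" using t0 by (simp add: field_simps power2_eq_square)
    then show False using cta by (simp add: t_def q_def)
  qed
  have Vt: "(t - h2/t) * VV f al = Ue m t * ((h1 - q*h2)*h2^3*(t^4 - h2^2)*(f - (h2/t + h1*t/h2))/t^6)"
    unfolding al_t V_t[OF t0] f0_t XY_g[OF t0 h1 h2 q0] XY_g2[OF t0 h1 h2 q0] by simp
  have ph: "phi h1 h2 f al = (f - a) * (f - (h2/t + h1*t/h2)) / h1"
    unfolding al_t a_t by (rule phi_fact[OF t0 h1 h2])
  have Aeq: "A = q^5 * Ue m t/(z^2-h1*q^2)"
    by (simp add: A_def Uf_Ue m_def t_def)
  have den: "z^2 - h1*q^2 = q^2*(t^2-h1)" using zt by (simp add: power_mult_distrib algebra_simps)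
  have scal: "K*(h1-q*h2)*h2^3*(t^4-h2^2)/t^6 = (t-h2/t)*q^5*al*(al-be)*(al-ga)/(h1*(z^2-h1*q^2))"
    using scalA0[OF t0 h1 h2 q0 th] unfolding K_def al_t be_t ga_t den
    by (simp only: zt)
  have "(t - h2/t) * NN f al = 0"
  proof -
    have "(t - h2/t) * NN f al = - (t - h2/t) * phi h1 h2 f al*(f-b)*A*al*(al-be)*(al-ga)
        + K*(f-a)*(f-b)*((t - h2/t) * VV f al)"
      unfolding NN_def by algebra
    also have "\<dots> = (f-a)*(f-b)*(f - (h2/t + h1*t/h2))*Ue m t *
        (K*(h1-q*h2)*h2^3*(t^4-h2^2)/t^6 - (t-h2/t)*q^5*al*(al-be)*(al-ga)/(h1*(z^2-h1*q^2)))"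
      unfolding Vt ph Aeq by (simp only: divide_inverse inverse_mult_distrib) algebra
    also have "\<dots> = 0" unfolding scal by simp
    finally show ?thesis .
  qed
  then show ?thesis using tv by simp
qed


lemma N_be: "NN f be = 0"
proof -
  define t where "t = h1/z"
  have t0: "t \<noteq> 0" using z0 h1 by (simp add: t_def)
  have zt: "z = h1/t" using h1 z0 by (simp add: t_def)
  have be_t: "be = t + h2/t" by (simp add: be_def gP_def t_def)
  have f0_t: "f0 = t + h1/(q*t)" using h1 z0 q0 by (simp add: f0_def fbar_def t_def field_simps)
  have b_t: "b = t + h1/t" using h1 z0 by (simp add: b_def fP_def t_def)
  have al_z: "al = z/q + h2*q/z" by (simp add: al_def gP_def)
  have al_t: "al = h1/(t*q) + h2*t*q/h1" using h1 t0 by (simp only: al_z) (simp add: zt field_simps)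
  have de_z: "de = z + h2/z" by (simp add: de_def gP_def)
  have de_t: "de = h1/t + h2*t/h1" using h1 t0 by (simp only: de_z) (simp add: zt field_simps)
  have den: "(h1/t)^2 - h1 = h1*(h1 - t^2)/t^2" using t0 by (simp add: field_simps power2_eq_square)
  have th: "h1 - t^2 \<noteq> 0"
  proof
    assume "h1 - t^2 = 0"
    then have "z^2 - h1 = 0" using zt den by simp
    then show False using cz1 by simp
  qed
  have tv: "t - h2/t \<noteq> 0"
  proof
    assume "t - h2/t = 0"
    then have "t^2 - h2 = 0" using t0 by (simp add: field_simps power2_eq_square)
    then show False using ctb by (simp add: t_def)
  qed
  have Vt: "(t - h2/t) * VV f be = Ue m t * ((h1 - q*h2)*h2^3*(t^4 - h2^2)*(f - (h2/t + h1*t/h2))/t^6)"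
    unfolding be_t V_t[OF t0] f0_t XY_g[OF t0 h1 h2 q0] XY_g2[OF t0 h1 h2 q0] by simp
  have ph: "phi h1 h2 f be = (f - b) * (f - (h2/t + h1*t/h2)) / h1"
    unfolding be_t b_t by (rule phi_fact[OF t0 h1 h2])
  have Beq: "B = z^8 * Ue m t/((z^2-h1)*h1^4)"
    by (simp add: B_def Uf_Ue m_def t_def)
  have scal: "K*(h1-q*h2)*h2^3*(t^4-h2^2)/t^6 = (t-h2/t)*(z^8/((z^2-h1)*h1^4))*be*(be-al)*(be-de)/h1"
    using scalB0[OF t0 h1 h2 q0 th] unfolding K_def be_t al_t de_t
    by (simp only: zt den)
  have "(t - h2/t) * NN f be = 0"
  proof -
    have "(t - h2/t) * NN f be = - (t - h2/t) * phi h1 h2 f be*(f-a)*B*be*(be-al)*(be-de)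
        + K*(f-a)*(f-b)*((t - h2/t) * VV f be)"
      unfolding NN_def by algebra
    also have "\<dots> = (f-a)*(f-b)*(f - (h2/t + h1*t/h2))*Ue m t *
        (K*(h1-q*h2)*h2^3*(t^4-h2^2)/t^6 - (t-h2/t)*(z^8/((z^2-h1)*h1^4))*be*(be-al)*(be-de)/h1)"
      unfolding Vt ph Beq by (simp only: divide_inverse inverse_mult_distrib) algebra
    also have "\<dots> = 0" unfolding scal by simp
    finally show ?thesis .
  qed
  then show ?thesis using tv by simp
qed


lemma VV0: "VV f 0 = 0"
proof -
  have pd: "Pd m h2 0 = h2^4 * Pn m h2 0" using h2 by (simp add: Pd_def Pn_def field_simps; algebra)
  have xy: "h2^4 * Xf h1 h2 q f0 f 0 - Yf h1 h2 q f0 f 0 = 0"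
    using h1 h2 q0 unfolding Xf_def Yf_def by (simp add: field_simps; algebra)
  have "VV f 0 = Pn m h2 0 * (h2^4 * Xf h1 h2 q f0 f 0 - Yf h1 h2 q f0 f 0)"
    unfolding V_eq pd by algebra
  then show ?thesis using xy by simp
qed

lemma N_0: "NN f 0 = 0"
  unfolding NN_def VV0 by simp

definition "C1 = (h1/q - h2)*(h1-h2)*(1/h2)"
definition "C2 = (q/h1 - 1/h2)*(1/h1 - 1/h2)*h2"
definition "PhiP = (FV - GV)*(CC (1/h1)*FV - CC (1/h2)*GV) - CC ((h1-h2)*(1/h1-1/h2))"
definition "X1p = CC q * (CC f0 * FV - CC f0 * GV - FV*GV - CC C1)"
definition "Y1p = CC (h1^2*h2^4) * (CC (f0*q/h1/h1)*FV - CC (f0*q/h1/h2)*GV - CC (1/h1/h2)*FV*GV - CC C2)"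
definition "Pdp = CC (-h2*m 7)*GV^3 + CC (h2^2*m 6 - 3*h2*m 8 - h2^5*m 0)*GV^2
   + CC (2*h2^2*m 7 - h2^3*m 5 + h2^5*m 1)*GV + CC (h2^6*m 0 - h2^5*m 2 + h2^4*m 4 - h2^3*m 6 + h2^2*m 8)"
definition "Pnp = CC (- m 1)*GV^3 + CC (m 2 - 3*h2*m 0 - m 8/h2^3)*GV^2
   + CC (2*h2*m 1 - m 3 + m 7/h2^2)*GV + CC (h2^2*m 0 - h2*m 2 + m 4 - m 6/h2 + m 8/h2^2)"
definition "Vp = (X1p + CC q*GV^2)*Pdp - (Y1p + CC (h1^2*h2^2)*GV^2)*Pnp + GV^4*(CC (m 8)*X1p - CC (m 0)*Y1p)"
definition "M1 = CC (-A)*(FV - CC b)*GV*(GV - CC be)*(GV - CC ga) + CC (-B)*(FV - CC a)*GV*(GV - CC al)*(GV - CC de)"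
definition "Nbi = PhiP * M1 + CC K * (FV - CC a) * (FV - CC b) * Vp"

lemma ev_PhiP: "ev PhiP f g = phi h1 h2 f g"
  by (simp add: PhiP_def phi_def)

lemma Xf_split: "Xf h1 h2 q f0 f g = ev X1p f g + q*g^2"
  unfolding Xf_def X1p_def C1_def by simp algebra
lemma Yf_split: "Yf h1 h2 q f0 f g = ev Y1p f g + h1^2*h2^2*g^2"
  unfolding Yf_def Y1p_def C2_def using h1 h2 by (simp add: field_simps; algebra)
lemma Pd_split: "Pd m h2 g = ev Pdp f g + m 8 * g^4"
  unfolding Pd_def Pdp_def by simp
lemma Pn_split: "Pn m h2 g = ev Pnp f g + m 0 * g^4"
  unfolding Pn_def Pnp_def by simp

lemma ev_Vp: "ev Vp f g = VV f g"
proof -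
  have "VV f g = (ev X1p f g + q*g^2) * (ev Pdp f g + m 8 * g^4)
      - (ev Y1p f g + h1^2*h2^2*g^2) * (ev Pnp f g + m 0 * g^4)"
    unfolding V_eq Xf_split Yf_split Pd_split[of g f] Pn_split[of g f] ..
  then show ?thesis unfolding Vp_def using qm8 m0 by simp algebra
qed

lemma ev_Nbi: "ev Nbi f g = NN f g"
  unfolding Nbi_def NN_def M1_def by (simp add: ev_PhiP ev_Vp) algebra


lemma bd_PhiP: "bd PhiP 2 2"
proof -
  have "bd PhiP (1+1) (1+1)" unfolding PhiP_def by (intro bdI) simp_all
  then show ?thesis by (simp add: eval_nat_numeral)
qed
lemma bd_X1p: "bd X1p 1 1"
proof -
  have "bd X1p (1+0) (0+1)" unfolding X1p_def by (intro bdI) simp_all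
  then show ?thesis by simp
qed
lemma bd_Y1p: "bd Y1p 1 1"
proof -
  have "bd Y1p (1+0) (0+1)" unfolding Y1p_def by (intro bdI) simp_all
  then show ?thesis by simp
qed
lemma bd_Pdp: "bd Pdp 0 3" unfolding Pdp_def by (intro bdI) simp_all
lemma bd_Pnp: "bd Pnp 0 3" unfolding Pnp_def by (intro bdI) simp_all
lemma bd_P1: "bd (X1p + CC q*GV^2) 1 2"
  by (intro bdI bd_mono[OF bd_X1p]) simp_all
lemma bd_P2: "bd (Y1p + CC (h1^2*h2^2)*GV^2) 1 2"
  by (intro bdI bd_mono[OF bd_Y1p]) simp_all
lemma bd_Vp: "bd Vp 1 5"
proof -
  have "bd Vp (1+0) (2+3)" unfolding Vp_def
    by (intro bd_add bd_diff bd_mult[OF bd_P1 bd_Pdp] bd_mult[OF bd_P2 bd_Pnp]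
         bd_mono[OF bd_mult[OF bd_GVpow[of 4 4 0] bd_diff[OF bd_CCmult[OF bd_X1p] bd_CCmult[OF bd_Y1p]]]])
       simp_all
  then show ?thesis by simp
qed
lemma bd_M1: "bd M1 1 3"
proof -
  have "bd M1 (1+0+0+0) (0+1+1+1)" unfolding M1_def by (intro bdI) simp_all
  then show ?thesis by (simp add: eval_nat_numeral)
qed
lemma bd_Nbi: "bd Nbi 3 5"
proof -
  have "bd Nbi (2+1) (2+3)" unfolding Nbi_def
    by (intro bd_add bd_mult[OF bd_PhiP bd_M1]
      bd_mono[OF bd_mult[OF bd_mult[OF bd_CCmult[OF bd_FVc] bd_FVc] bd_Vp]]) simp_all
  then show ?thesis by simp
qed


lemma al0: "al \<noteq> 0" using cal by (simp add: al_def q_def)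
lemma be0: "be \<noteq> 0" using cbe by (simp add: be_def)
lemma albe: "al \<noteq> be" using calbe by (simp add: al_def be_def q_def)

definition "Cg = [:-0,1:] * [:-al,1:] * [:-be,1:]"
definition "Hbi = map_poly (\<lambda>p. p div Cg) Nbi"
definition "Tbi = CC (y0*A)*PhiP*(FV - CC b) + CC (y2*B)*PhiP*(FV - CC a) + CC y1 * Hbi"
definition "cc = cf Tbi"

lemma Cg_dvd: "Cg dvd coeff Nbi i"
proof -
  have r: "\<forall>f. ev Nbi f r = 0" if "r = 0 \<or> r = al \<or> r = be" for r
    using that by (auto simp: ev_Nbi N_0 N_al N_be)
  show ?thesis unfolding Cg_def
    by (rule dvd3) (use ev_root_coeff[OF r] al0 be0 albe in auto)
qed

lemma Nbi_smult: "Nbi = smult Cg Hbi"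
proof (rule poly_eqI)
  fix n
  show "coeff Nbi n = coeff (smult Cg Hbi) n"
    using Cg_dvd[of n] by (simp add: Hbi_def coeff_map_poly)
qed

lemma poly_Cg: "poly Cg g = g*(g-al)*(g-be)" by (simp add: Cg_def algebra_simps)
lemma Cg0: "Cg \<noteq> 0" unfolding Cg_def by simp
lemma Cg_deg: "degree Cg = 3"
  unfolding Cg_def by (subst degree_mult_eq; simp)+
lemma Cg_lead: "coeff Cg 3 = 1"
proof -
  have "lead_coeff Cg = 1" unfolding Cg_def by (simp add: lead_coeff_mult)
  then show ?thesis using Cg_deg by simp
qed

lemma ev_Nbi_H: "ev Nbi f g = g*(g-al)*(g-be) * ev Hbi f g"
proof -
  have "ev Nbi f g = poly (Cg * poly Hbi [:f:]) g"
    by (subst Nbi_smult) (simp add: ev_def)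
  then show ?thesis by (simp add: poly_Cg ev_def)
qed

lemma bd_Hbi: "bd Hbi 3 2"
  unfolding bd_def
proof (intro conjI allI)
  show "degree Hbi \<le> 3" unfolding Hbi_def
    using bd_Nbi map_poly_degree_leq[of "\<lambda>p. p div Cg" Nbi] by (simp add: bd_def)
  fix i
  have ci: "coeff Hbi i = coeff Nbi i div Cg" by (simp add: Hbi_def coeff_map_poly)
  show "degree (coeff Hbi i) \<le> 2"
  proof (cases "coeff Hbi i = 0")
    case False
    have e: "coeff Nbi i = Cg * coeff Hbi i" using Cg_dvd[of i] ci by simp
    have "degree (coeff Nbi i) = 3 + degree (coeff Hbi i)"
      unfolding e using Cg0 False by (simp add: degree_mult_eq Cg_deg)
    moreover have "degree (coeff Nbi i) \<le> 5" using bd_Nbi by (simp add: bd_def)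
    ultimately show ?thesis by simp
  qed simp
qed

lemma bd_Tbi: "bd Tbi 3 2"
proof -
  have "bd Tbi (2+1) (2+0)" unfolding Tbi_def
    by (intro bd_add bd_CCmult bd_mult[OF bd_CCmult[OF bd_PhiP] bd_FVc] bd_mono[OF bd_Hbi]) simp_all
  then show ?thesis by simp
qed

lemma ev_Tbi: "ev Tbi f g = y0*A*phi h1 h2 f g*(f-b) + y2*B*phi h1 h2 f g*(f-a) + y1*ev Hbi f g"
  unfolding Tbi_def by (simp add: ev_PhiP)

lemma top_PhiP: "coeff (coeff PhiP 2) 2 = 0"
proof -
  have b1: "bd (FV - GV) 1 1" by (intro bdI) simp_all
  have b2: "bd (CC (1/h1)*FV - CC (1/h2)*GV) 1 1" by (intro bdI) simp_all
  show ?thesis unfolding PhiP_def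
    by (simp add: top_mult'[OF b1 b2] del: coeff_CC_mult) (simp add: FV_def GV_def CC_def coeff_pCons numeral_2_eq_2)
qed

lemma top_Vp: "coeff (coeff Vp 1) 5 = h1*h2^3 - h1^2*h2^2"
proof -
  have t1: "coeff (coeff ((X1p + CC q*GV^2)*Pdp) 1) 5 = 0"
    apply (subst top_mult'[OF bd_P1 bd_Pdp]) apply simp_all
    using bd_coeff_in[OF bd_X1p, of 2 1] by (simp add: GV_pow CC_def)
  have t2: "coeff (coeff ((Y1p + CC (h1^2*h2^2)*GV^2)*Pnp) 1) 5 = 0"
    apply (subst top_mult'[OF bd_P2 bd_Pnp]) apply simp_all
    using bd_coeff_in[OF bd_Y1p, of 2 1] by (simp add: GV_pow CC_def)
  have b3: "bd (CC (m 8)*X1p - CC (m 0)*Y1p) 1 1" by (intro bd_diff bd_CCmult bd_X1p bd_Y1p)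
  have tx: "coeff (coeff X1p 1) 1 = - q"
    unfolding X1p_def by (simp add: FV_def GV_def CC_def)
  have ty: "coeff (coeff Y1p 1) 1 = - h1*h2^3"
    unfolding Y1p_def using h1 h2 by (simp add: FV_def GV_def CC_def power2_eq_square power3_eq_cube power4_eq_xxxx field_simps)
  have t3: "coeff (coeff (GV^4*(CC (m 8)*X1p - CC (m 0)*Y1p)) 1) 5 = h1*h2^3 - h1^2*h2^2"
    apply (subst top_mult'[OF bd_GVpow[of 4 4 0] b3]) apply simp_all
    using qm8 m0 tx ty by (simp add: GV_pow algebra_simps)
  show ?thesis unfolding Vp_def using t1 t2 t3 by simp
qed

lemma top_Nbi: "coeff (coeff Nbi 3) 5 = K*(h1*h2^3 - h1^2*h2^2)"
proof -
  have t1: "coeff (coeff (PhiP * M1) 3) 5 = 0"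
    by (subst top_mult'[OF bd_PhiP bd_M1]) (simp_all add: top_PhiP)
  have b: "bd (CC K * (FV - CC a) * (FV - CC b)) 2 0"
    using bd_mult[OF bd_CCmult[OF bd_FVc] bd_FVc] by (simp add: eval_nat_numeral)
  have t2: "coeff (coeff (CC K * (FV - CC a) * (FV - CC b) * Vp) 3) 5 = K*(h1*h2^3 - h1^2*h2^2)"
    apply (subst top_mult'[OF b bd_Vp]) apply simp_all
    apply (subst top_mult'[OF bd_CCmult[OF bd_FVc] bd_FVc]) apply simp_all
    using top_Vp by (simp add: FV_def CC_def)
  show ?thesis unfolding Nbi_def using t1 t2 by simp
qed

lemma top_H: "coeff (coeff Hbi 3) 2 = coeff (coeff Nbi 3) 5"
proof -
  have e: "coeff Nbi 3 = Cg * coeff Hbi 3" by (subst Nbi_smult) simp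
  have "coeff (Cg * coeff Hbi 3) (3 + 2) = coeff Cg 3 * coeff (coeff Hbi 3) 2"
    by (rule coeff_mult_top) (use Cg_deg bd_Hbi in \<open>auto simp: bd_def\<close>)
  then show ?thesis using e Cg_lead by simp
qed

lemma c32: "cc 3 2 = y1*K*(h1*h2^3 - h1^2*h2^2)"
proof -
  have t1: "coeff (coeff (CC (y0*A)*PhiP*(FV - CC b)) 3) 2 = 0"
    by (subst top_mult'[OF bd_CCmult[OF bd_PhiP] bd_FVc]) (simp_all add: top_PhiP)
  have t2: "coeff (coeff (CC (y2*B)*PhiP*(FV - CC a)) 3) 2 = 0"
    by (subst top_mult'[OF bd_CCmult[OF bd_PhiP] bd_FVc]) (simp_all add: top_PhiP)
  show ?thesis unfolding cc_def cf_def Tbi_def using t1 t2 by (simp add: top_H top_Nbi)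
qed

lemma K0: "K \<noteq> 0" using h1 h2 h12 z0 q0 czq by (simp add: K_def q_def)
lemma c32_nz: "cc 3 2 \<noteq> 0"
proof -
  have "h1*h2^3 - h1^2*h2^2 = h1*h2^2*(h2-h1)" by algebra
  then show ?thesis unfolding c32 using y1n K0 h1 h2 h12 by simp
qed


lemma evH: "g \<noteq> 0 \<Longrightarrow> g \<noteq> al \<Longrightarrow> g \<noteq> be \<Longrightarrow> ev Hbi f g = NN f g / (g*(g-al)*(g-be))"
proof -
  assume a: "g \<noteq> 0" "g \<noteq> al" "g \<noteq> be"
  have "NN f g = (g*(g-al)*(g-be)) * ev Hbi f g" using ev_Nbi_H[of f g] ev_Nbi[of f g] by simp
  moreover have "g*(g-al)*(g-be) \<noteq> 0" using a by simp
  ultimately show ?thesis by (simp add: eq_divide_eq mult.commute)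
qed

lemma bip_cc: "bipoly cc f g = ev Tbi f g"
  unfolding cc_def by (rule bipoly_cf[OF bd_Tbi])

lemma Fcurve_eq:
  assumes "g \<noteq> 0" "phi h1 h2 f g \<noteq> 0" "f \<noteq> a" "f \<noteq> b" "g \<noteq> al" "g \<noteq> be"
  shows "Fcurve h1 h2 u z y0 y1 y2 f g = bipoly cc f g"
proof -
  have L: "L1 h1 h2 u z y0 y1 y2 f g = A/(f-a)*(y0 - (g-ga)/(g-al)*y1) + B/(f-b)*(y2 - (g-de)/(g-be)*y1)
       + K*VV f g/(g*phi h1 h2 f g*(g-be)*(g-al))*y1"
    unfolding L1_def Let_def q_def[symmetric] A_def B_def K_def VV_def f0_def a_def b_def al_def be_def
      ga_def de_def
    by (simp add: divide_divide_eq_left mult.assoc)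
  have "Fcurve h1 h2 u z y0 y1 y2 f g = phi h1 h2 f g * (f - a) * (f - b) * L1 h1 h2 u z y0 y1 y2 f g"
    unfolding Fcurve_def q_def[symmetric] a_def b_def ..
  also have "\<dots> = y0*A*phi h1 h2 f g*(f-b) + y2*B*phi h1 h2 f g*(f-a) + y1*(NN f g/(g*(g-al)*(g-be)))"
    unfolding L NN_def by (rule Fgen) (use assms in auto)
  also have "\<dots> = bipoly cc f g" unfolding bip_cc ev_Tbi using evH assms by simp
  finally show ?thesis .
qed

lemma Upol_root: "i \<in> {1..8} \<Longrightarrow> Uf u (u i) = 0"
  unfolding Uf_def Upol_def poly_prod by (rule prod_zero) auto

lemma VV_curve:
  assumes i: "i \<in> {1..8}"
  shows "VV (fP h1 (u i)) (gP h2 (u i)) = 0"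
proof -
  let ?t = "u i"
  have t0: "?t \<noteq> 0" using un i by auto
  have tv: "?t - h2/?t \<noteq> 0"
  proof
    assume "?t - h2/?t = 0"
    then have "?t^2 - h2 = 0" using t0 by (simp add: field_simps power2_eq_square)
    then show False using cui i by auto
  qed
  have "(?t - h2/?t) * VV (fP h1 ?t) (gP h2 ?t) = 0"
    unfolding gP_def fP_def V_t[OF t0] XY_curve[OF t0 h1 h2 q0]
    using Upol_root[OF i] by (simp add: Uf_Ue m_def)
  then show ?thesis using tv by simp
qed

lemma T_zero_on_curve:
  assumes "NN f g = 0" "g \<noteq> 0" "g \<noteq> al" "g \<noteq> be" "phi h1 h2 f g = 0"
  shows "bipoly cc f g = 0"
  unfolding bip_cc ev_Tbi using assms evH by simp

lemma through: "through12 h1 h2 u z y0 y1 y2 cc"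
proof -
  have fa: "fP h1 (h1*q/z) = a" using h1 z0 q0 by (simp add: a_def fP_def field_simps)
  have gga: "gP h2 (h1/(z/q)) = ga" by (simp add: ga_def)
  have P1: "\<forall>i\<in>{1..8}. bipoly cc (fP h1 (u i)) (gP h2 (u i)) = 0"
  proof
    fix i assume i: "i \<in> {1..8::nat}"
    have t0: "u i \<noteq> 0" using un i by auto
    show "bipoly cc (fP h1 (u i)) (gP h2 (u i)) = 0"
      by (rule T_zero_on_curve) (use cui i phi_curve[OF t0 h1 h2] VV_curve[OF i] in
          \<open>auto simp: NN_def al_def be_def q_def\<close>)
  qed
  have P2: "bipoly cc b de = 0"
    by (rule T_zero_on_curve)
       (use cde cdeal cdebe phi_curve[OF z0 h1 h2] in \<open>auto simp: NN_def al_def be_def de_def b_def q_def\<close>)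
  have P3: "bipoly cc a ga = 0"
  proof -
    have t0: "h1*q/z \<noteq> 0" using h1 q0 z0 by simp
    show ?thesis
      by (rule T_zero_on_curve)
         (use cga cgaal cgabe phi_curve[OF t0 h1 h2] fa in \<open>auto simp: NN_def al_def be_def ga_def q_def\<close>)
  qed
  have Q1: "bipoly cc b g = 0" if g: "(g - de)/(g - be) = y2/y1" for g
  proof -
    have gbe: "g \<noteq> be" using g y2n y1n by auto
    have e: "y1*(g-de) = y2*(g-be)" using g gbe y1n by (simp add: field_simps)
    then have "g = (de*y1 - be*y2)/(y1-y2)" using y12 by (simp add: field_simps; algebra)
    then have g0: "g \<noteq> 0" "g \<noteq> al" using cQ1 cQ1a by (simp_all add: de_def be_def al_def q_def)
    have "bipoly cc b g = y2*(phi h1 h2 b g*(b-a)*B) + y1*(-(phi h1 h2 b g*(b-a)*B*g*(g-al)*(g-de))/(g*(g-al)*(g-be)))"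
      unfolding bip_cc ev_Tbi evH[OF g0 gbe] NN_def by (simp add: mult_ac)
    also have "\<dots> = phi h1 h2 b g*(b-a)*B*(y2 - y1*(g-de)/(g-be))"
      by (rule Qgen) (use g0 gbe in auto)
    also have "\<dots> = 0" using e gbe by simp
    finally show ?thesis .
  qed
  have Q2: "bipoly cc a g = 0" if g: "(g - al)/(g - ga) = y1/y0" for g
  proof -
    have gga: "g \<noteq> ga" using g y0n y1n by auto
    have e: "y0*(g-al) = y1*(g-ga)" using g gga y0n by (simp add: field_simps)
    have gal: "g \<noteq> al" using e y1n gga by auto
    have "g = (al*y0 - ga*y1)/(y0-y1)" using e y01 by (simp add: field_simps; algebra)
    then have g0: "g \<noteq> 0" "g \<noteq> be" using cQ2 cQ2b by (simp_all add: ga_def be_def al_def q_def)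
    have "bipoly cc a g = y0*(phi h1 h2 a g*(a-b)*A) + y1*(-(phi h1 h2 a g*(a-b)*A*g*(g-be)*(g-ga))/(g*(g-be)*(g-al)))"
      unfolding bip_cc ev_Tbi evH[OF g0(1) gal g0(2)] NN_def by (simp add: mult_ac)
    also have "\<dots> = phi h1 h2 a g*(a-b)*A*(y0 - y1*(g-ga)/(g-al))"
      by (rule Qgen) (use g0 gal in auto)
    also have "\<dots> = 0" using e gal by (simp add: eq_divide_eq)
    finally show ?thesis .
  qed
  show ?thesis
    unfolding through12_def Let_def q_def[symmetric]
    using P1 P2 P3 Q1 Q2 fa gga
    by (simp add: a_def[symmetric] b_def[symmetric] de_def[symmetric] be_def[symmetric]
        al_def[symmetric] ga_def[symmetric])
qed

end

lemma ratio_lemma: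
  fixes x y c d :: complex
  assumes "c \<noteq> 0" "d \<noteq> 0" "y \<noteq> 0"
  shows "(x*c/d)/(y*c/d) = x/y"
  using assms by (simp add: field_simps)

context gen begin

lemma through_facts:
  assumes "through12 h1 h2 u z y0 y1 y2 d"
  shows "\<forall>i\<in>{1..8}. bipoly d (fP h1 (u i)) (gP h2 (u i)) = 0"
    "bipoly d (fP h1 z) (gP h2 z) = 0"
    "bipoly d (fP h1 (h1*q/z)) (gP h2 (h1*q/z)) = 0"
    "\<forall>g. (g - gP h2 z)/(g - gP h2 (h1/z)) = y2/y1 \<longrightarrow> bipoly d (fP h1 z) g = 0"
    "\<forall>g. (g - gP h2 (z/q))/(g - gP h2 (h1/(z/q))) = y1/y0 \<longrightarrow> bipoly d (fP h1 (z/q)) g = 0"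
  using assms unfolding through12_def Let_def q_def[symmetric] by auto

lemma unique:
  assumes box: "in_box32 d" and thr: "through12 h1 h2 u z y0 y1 y2 d"
  shows "\<exists>s. \<forall>i j. d i j = s * cc i j"
proof -
  define s where "s = d 3 2 / cc 3 2"
  define e where "e i j = d i j - s * cc i j" for i j
  have e32: "e 3 2 = 0" using c32_nz by (simp add: e_def s_def)
  have boxe: "in_box32 e" using box in_box_cf[of Tbi]
    by (simp add: in_box32_def e_def cc_def)
  have bip_e: "bipoly e f g = bipoly d f g - s * bipoly cc f g" for f g
    unfolding bipoly_def e_def by (simp add: sum_subtractf sum_distrib_left algebra_simps)
  note td = through_facts[OF thr]
  note tc = through_facts[OF through]
  define R where "R = u ` {1..8} \<union> {z, h1*q/z}"
  have hq0: "h1*q/z \<noteq> 0" using h1 q0 z0 by simp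
  have Rroot: "poly (upol h1 h2 e) r = 0" if "r \<in> R" for r
  proof -
    have "r \<noteq> 0 \<and> bipoly e (fP h1 r) (gP h2 r) = 0"
      using that un td tc hq0 z0 unfolding R_def by (auto simp: bip_e)
    then show ?thesis by (simp add: poly_upol)
  qed
  have cardR: "card R = 10"
  proof -
    have inj: "inj_on u {1..8}" using cinj by (auto simp: inj_on_def)
    have c8: "card (u ` {1..8}) = 8" using card_image[OF inj] by simp
    have zn: "z \<notin> u ` {1..8}" using cui by auto
    have qn: "h1*q/z \<notin> u ` {1..8}" using cui by (auto simp: q_def)
    have zq: "z \<noteq> h1*q/z"
    proof
      assume "z = h1*q/z"
      then have "z^2 - h1*q = 0" using z0 by (simp add: field_simps power2_eq_square)
      then show False using czq by (simp add: q_def)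
    qed
    show ?thesis unfolding R_def using c8 zn qn zq by (simp add: card_insert_if)
  qed
  have pe0: "upol h1 h2 e = 0"
  proof (rule ccontr)
    assume ne: "upol h1 h2 e \<noteq> 0"
    have "R \<subseteq> {x. poly (upol h1 h2 e) x = 0}" using Rroot by auto
    then have "card R \<le> card {x. poly (upol h1 h2 e) x = 0}"
      by (intro card_mono poly_roots_finite ne)
    also have "\<dots> \<le> degree (upol h1 h2 e)" by (rule card_poly_roots_bound[OF ne])
    also have "\<dots> \<le> 9" by (rule degree_upol[of e, OF e32])
    finally show False using cardR by simp
  qed
  have curve0: "bipoly e (fP h1 t) (gP h2 t) = 0" if "t \<noteq> 0" for t
    using poly_upol[OF that, of h1 h2 e] pe0 that by simp
  define K0 where "K0 = (h1-h2)*(1/h1-1/h2)"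
  have key: "bipoly e f g = h2 * Ek e 2 f * phi h1 h2 f g" if f: "f^2 \<noteq> 4*h1" for f g
  proof -
    define sq where "sq = csqrt (f^2 - 4*h1)"
    define t where "t = (f + sq)/2"
    have sqsq: "sq^2 = f^2 - 4*h1" by (simp add: sq_def)
    have tq: "t^2 - f*t + h1 = 0"
    proof -
      have "t^2 - f*t + h1 = (sq^2 - (f^2 - 4*h1))/4" unfolding t_def by (simp add: field_simps; algebra)
      then show ?thesis using sqsq by simp
    qed
    have t0: "t \<noteq> 0" using tq h1 by auto
    have ft: "fP h1 t = f"
    proof -
      have "t*t + h1 = f*t" using tq by (simp add: algebra_simps power2_eq_square)
      then show ?thesis using t0 by (simp add: fP_def field_simps)
    qed
    have th: "t^2 \<noteq> h1"
    proof
      assume a: "t^2 = h1"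
      then have "f*t = 2*t^2" using tq by (simp add: algebra_simps)
      then have "f = 2*t" using t0 by (simp add: power2_eq_square)
      then have "f^2 = 4*h1" using a by (simp add: power2_eq_square)
      then show False using f by simp
    qed
    have t'0: "h1/t \<noteq> 0" using h1 t0 by simp
    have ft': "fP h1 (h1/t) = f" using ft h1 t0 by (simp add: fP_def add.commute)
    have gd: "gP h2 t \<noteq> gP h2 (h1/t)"
    proof
      assume "gP h2 t = gP h2 (h1/t)"
      then have "(t^2 - h1)*(h1 - h2) = 0" using t0 h1
        by (simp add: gP_def field_simps power2_eq_square; algebra)
      then show False using th h12 by simp
    qed
    have b1: "bipoly e f (gP h2 t) = 0" using curve0[OF t0] ft by simp
    have b2: "bipoly e f (gP h2 (h1/t)) = 0" using curve0[OF t'0] ft' by simp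
    have p1: "phi h1 h2 f (gP h2 t) = 0" using phi_curve[OF t0 h1 h2] ft by simp
    have p2: "phi h1 h2 f (gP h2 (h1/t)) = 0" using phi_curve[OF t'0 h1 h2] ft' by simp
    define al' where "al' = Ek e 1 f + h2 * Ek e 2 f * (f/h1 + f/h2)"
    define be' where "be' = Ek e 0 f - h2 * Ek e 2 f * (f^2/h1 - K0)"
    have Rg: "bipoly e f g' - h2 * Ek e 2 f * phi h1 h2 f g' = al'*g' + be'" for g'
      unfolding bipoly_expand phi_expand al'_def be'_def K0_def using h2
      by (simp add: field_simps; algebra)
    have "al' = 0 \<and> be' = 0"
      by (rule lin2[OF _ _ gd]) (use Rg[of "gP h2 t"] Rg[of "gP h2 (h1/t)"] b1 b2 p1 p2 in auto)
    then show ?thesis using Rg[of g] by simp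
  qed
  have debe: "de \<noteq> be" using cdebe by (simp add: de_def be_def)
  have alga: "al \<noteq> ga" using cgaal by (simp add: al_def ga_def q_def)
  have E2b: "Ek e 2 b = 0"
  proof -
    define g where "g = (de*y1 - be*y2)/(y1-y2)"
    have y12': "y1 - y2 \<noteq> 0" using y12 by simp
    have g1: "g - de = y2*(de-be)/(y1-y2)" unfolding g_def using y12' by (simp add: field_simps; algebra)
    have g2: "g - be = y1*(de-be)/(y1-y2)" unfolding g_def using y12' by (simp add: field_simps; algebra)
    have rat: "(g - gP h2 z)/(g - gP h2 (h1/z)) = y2/y1"
      unfolding de_def[symmetric] be_def[symmetric] g1 g2 by (rule ratio_lemma) (use debe y12' y1n in auto)
    have "bipoly e b g = 0" using td(4) tc(4) rat by (simp add: bip_e b_def)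
    moreover have "phi h1 h2 b g \<noteq> 0"
      unfolding b_def phi_roots_g[OF z0 h1 h2] de_def[symmetric] be_def[symmetric] g1 g2
      using debe y12' y1n y2n h2 by simp
    moreover have "b^2 \<noteq> 4*h1" using cb4 by (simp add: b_def)
    ultimately show ?thesis using key[of b g] h2 by simp
  qed
  have E2a: "Ek e 2 a = 0"
  proof -
    define g where "g = (al*y0 - ga*y1)/(y0-y1)"
    have y01': "y0 - y1 \<noteq> 0" using y01 by simp
    have g1: "g - al = y1*(al-ga)/(y0-y1)" unfolding g_def using y01' by (simp add: field_simps; algebra)
    have g2: "g - ga = y0*(al-ga)/(y0-y1)" unfolding g_def using y01' by (simp add: field_simps; algebra)
    have gg: "gP h2 (h1/(z/q)) = ga" by (simp add: ga_def)
    have rat: "(g - gP h2 (z/q))/(g - gP h2 (h1/(z/q))) = y1/y0"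
      unfolding gg al_def[symmetric] g1 g2 by (rule ratio_lemma) (use alga y01' y0n in auto)
    have "bipoly e a g = 0" using td(5) tc(5) rat by (simp add: bip_e a_def)
    moreover have "phi h1 h2 a g \<noteq> 0"
    proof -
      have zq0: "z/q \<noteq> 0" using z0 q0 by simp
      show ?thesis
        unfolding a_def phi_roots_g[OF zq0 h1 h2] gg al_def[symmetric] g1 g2
        using alga y01' y1n y0n h2 by simp
    qed
    moreover have "a^2 \<noteq> 4*h1" using ca4 by (simp add: a_def q_def)
    ultimately show ?thesis using key[of a g] h2 by simp
  qed
  define S where "S = {f::complex. f^2 = 4*h1}"
  have finS: "finite S" unfolding S_def by (rule finite_sq)
  have e22: "e 2 2 = 0"
  proof -
    define P4 where "P4 = [:e 0 0, e 1 0, e 2 0, e 3 0:] - smult h2 ([:e 0 2, e 1 2, e 2 2:] * [:-K0, 0, 1/h1:])"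
    have "P4 = 0"
    proof (rule cofin_zero[OF finS], intro allI impI)
      fix f assume "f \<notin> S"
      then have f: "f^2 \<noteq> 4*h1" by (simp add: S_def)
      have "bipoly e f 0 = h2 * Ek e 2 f * phi h1 h2 f 0" by (rule key[OF f])
      then have "Ek e 0 f = h2 * Ek e 2 f * (f^2/h1 - K0)"
        by (simp add: bipoly_expand phi_expand K0_def)
      moreover have "Ek e 2 f = poly [:e 0 2, e 1 2, e 2 2:] f"
        using e32 by (simp add: Ek_poly)
      ultimately show "poly P4 f = 0"
        unfolding P4_def using e32 by (simp add: Ek_poly algebra_simps power2_eq_square)
    qed
    then have "coeff P4 4 = 0" by simp
    moreover have "coeff ([:e 0 2, e 1 2, e 2 2:] * [:-K0, 0, 1/h1:]) (2+2) = e 2 2 * (1/h1)"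
      by (subst coeff_mult_top) (simp_all add: degree_pCons_le numeral_2_eq_2)
    ultimately have "h2 * (e 2 2 * (1/h1)) = 0"
      unfolding P4_def by (simp add: numeral_eq_Suc)
    then show ?thesis using h1 h2 by simp
  qed
  have E2zero: "e 0 2 = 0 \<and> e 1 2 = 0"
  proof -
    have "Ek e 2 f = e 1 2 * f + e 0 2" for f using e22 e32 by (simp add: Ek_def sum3 algebra_simps)
    then have "e 1 2 * a + e 0 2 = 0" "e 1 2 * b + e 0 2 = 0" using E2a E2b by auto
    moreover have "a \<noteq> b" using cab by (simp add: a_def b_def q_def)
    ultimately show ?thesis using lin2 by blast
  qed
  have E2f: "Ek e 2 f = 0" for f using E2zero e22 e32 by (simp add: Ek_def sum3)
  have zk: "e i k = 0" if "i \<le> 3" "k \<le> 2" for i k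
  proof -
    have off: "Ek e 0 f = 0 \<and> Ek e 1 f = 0" if "f \<notin> S" for f
    proof -
      have f: "f^2 \<noteq> 4*h1" using that by (simp add: S_def)
      have "bipoly e f g = 0" for g using key[OF f, of g] E2f by simp
      then have "bipoly e f 0 = 0" "bipoly e f 1 = 0" by auto
      then show ?thesis using E2f by (simp add: bipoly_expand)
    qed
    have pz: "[:e 0 k, e 1 k, e 2 k, e 3 k:] = 0" if "k \<le> 1" for k
    proof (rule cofin_zero[OF finS], intro allI impI)
      fix f assume fS: "f \<notin> S"
      have "poly [:e 0 k, e 1 k, e 2 k, e 3 k:] f = Ek e k f" by (rule Ek_poly[symmetric])
      moreover have "Ek e k f = 0" using off[OF fS] that by (auto simp: le_Suc_eq)
      ultimately show "poly [:e 0 k, e 1 k, e 2 k, e 3 k:] f = 0" by simp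
    qed
    show ?thesis
    proof (cases "k \<le> 1")
      case True
      have "coeff [:e 0 k, e 1 k, e 2 k, e 3 k:] i = 0" using pz[OF True] by simp
      then show ?thesis using \<open>i \<le> 3\<close> by (auto simp: le_Suc_eq numeral_eq_Suc)
    next
      case False
      then have "k = 2" using \<open>k \<le> 2\<close> by simp
      then show ?thesis using E2zero e22 e32 \<open>i \<le> 3\<close> by (auto simp: le_Suc_eq numeral_eq_Suc)
    qed
  qed
  have "e i j = 0" for i j
    using zk[of i j] boxe unfolding in_box32_def by (meson not_le)
  then show ?thesis by (intro exI[of _ s]) (simp add: e_def)
qed


lemma main:
  "\<exists>c. in_box32 c \<and> (\<exists>j. c 3 j \<noteq> 0) \<and> (\<exists>i. c i 2 \<noteq> 0)
          \<and> (\<forall>f g. g \<noteq> 0 \<and> phi h1 h2 f g \<noteq> 0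
                   \<and> f \<noteq> fP h1 (z / qpar h1 h2 u) \<and> f \<noteq> fP h1 z
                   \<and> g \<noteq> gP h2 (z / qpar h1 h2 u) \<and> g \<noteq> gP h2 (h1 / z)
                   \<longrightarrow> Fcurve h1 h2 u z y0 y1 y2 f g = bipoly c f g)
          \<and> through12 h1 h2 u z y0 y1 y2 c
          \<and> (\<forall>d. in_box32 d \<and> through12 h1 h2 u z y0 y1 y2 d
                 \<longrightarrow> (\<exists>s. \<forall>i j. d i j = s * c i j))"
proof (intro exI[of _ cc] conjI allI impI)
  show "in_box32 cc" unfolding cc_def by (rule in_box_cf)
  show "\<exists>j. cc 3 j \<noteq> 0" using c32_nz by blast
  show "\<exists>i. cc i 2 \<noteq> 0" using c32_nz by blast
  show "through12 h1 h2 u z y0 y1 y2 cc" by (rule through)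
next
  fix f g
  assume "g \<noteq> 0 \<and> phi h1 h2 f g \<noteq> 0 \<and> f \<noteq> fP h1 (z / qpar h1 h2 u) \<and> f \<noteq> fP h1 z
          \<and> g \<noteq> gP h2 (z / qpar h1 h2 u) \<and> g \<noteq> gP h2 (h1 / z)"
  then show "Fcurve h1 h2 u z y0 y1 y2 f g = bipoly cc f g"
    by (intro Fcurve_eq) (auto simp: a_def b_def al_def be_def q_def)
next
  fix d
  assume "in_box32 d \<and> through12 h1 h2 u z y0 y1 y2 d"
  then show "\<exists>s. \<forall>i j. d i j = s * cc i j" using unique by blast
qed

end

lemma pf_sub:
  assumes p: "polyfun n p" and r: "polyfun n r" shows "polyfun n (\<lambda>x. p x - r x)"
proof -
  have c: "polyfun n (\<lambda>x. (-1::complex))" by (rule pf_const)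
  from pf_add[OF p pf_mult[OF c r]] show ?thesis by simp
qed
lemma pf_pow: "polyfun n p \<Longrightarrow> polyfun n (\<lambda>x. p x ^ k)"
proof (induct k)
  case 0 then show ?case using pf_const[of n 1] by simp
next
  case (Suc k) then show ?case using pf_mult[of n p "\<lambda>x. p x ^ k"] by simp
qed
lemma pf_prod: "finite S \<Longrightarrow> (\<forall>i\<in>S. polyfun n (p i)) \<Longrightarrow> polyfun n (\<lambda>x. \<Prod>i\<in>S. p i x)"
proof (induct S rule: finite_induct)
  case empty then show ?case using pf_const[of n 1] by simp
next
  case (insert a F)
  then show ?case using pf_mult[of n "p a" "\<lambda>x. \<Prod>i\<in>F. p i x"] by simp
qed

definition Dbase :: "complex \<Rightarrow> complex \<Rightarrow> complex \<Rightarrow> complex \<Rightarrow> complex \<Rightarrow> complex \<Rightarrow> complex \<Rightarrow> complex" where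
  "Dbase H1 H2 S Z Y0 Y1 Y2 = H1*H2*(H1-H2)*Z*Y0*Y1*Y2*(Y0-Y1)*(Y1-Y2)*S
    *(H1^2*H2^2-S)*(Z^2*S^2-H1^5*H2^4)*(Z^2-H1)*(Z^2*S-H1^3*H2^2)*(S-H1*H2^3)
    *(Z^2*S^2-H1^4*H2^5)*(H1^2-H2*Z^2)*(Z^2*S^2+H1^4*H2^5)*(H1^2+H2*Z^2)
    *(Z^2*S^2+H1^4*H2^5-H1^3*H2^2*S-H1*H2^3*Z^2*S)*(Z^2+H2)
    *(H1^2*H2^2*S*(Z^2+H2)-Z^2*S^2-H1^4*H2^5)*(H1*(Z^2+H2)-(H1^2+H2*Z^2))
    *(H1^6*H2^4+H2*Z^2*S^2)*(H1^6*H2^4+H2*Z^2*S^2-H1*Z^2*S^2-H1^5*H2^5)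
    *(H1^6*H2^4+H2*Z^2*S^2-H1^2*H2^2*S*(H1^2+H2*Z^2))
    *(Z^2*S^2+H1^5*H2^4-H1^2*H2^2*Z^2*S-H1^3*H2^2*S)
    *(H1*(Z^2+H2)*Y1-(H1^2+H2*Z^2)*Y2)
    *(H1*H2^2*S*(H1*(Z^2+H2)*Y1-(H1^2+H2*Z^2)*Y2)-(Z^2*S^2+H1^4*H2^5)*(Y1-Y2))
    *(H1*(Z^2*S^2+H1^4*H2^5)*Y0-(H1^6*H2^4+H2*Z^2*S^2)*Y1)
    *(H1*(Z^2*S^2+H1^4*H2^5)*Y0-(H1^6*H2^4+H2*Z^2*S^2)*Y1-H1^2*H2^2*S*(H1^2+H2*Z^2)*(Y0-Y1))"

definition Dui :: "complex \<Rightarrow> complex \<Rightarrow> complex \<Rightarrow> complex \<Rightarrow> complex \<Rightarrow> complex" where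
  "Dui H1 H2 S Z U = U*(U^2-H2)*(U^2+H2)*(H1^2*H2^2*Z*S*(U^2+H2)-U*(Z^2*S^2+H1^4*H2^5))
    *(H1*Z*(U^2+H2)-U*(H1^2+H2*Z^2))*(U-Z)*(U*Z*S-H1^3*H2^2)"

definition Dexpr :: "complex \<Rightarrow> complex \<Rightarrow> (nat \<Rightarrow> complex) \<Rightarrow> complex \<Rightarrow> complex \<Rightarrow> complex \<Rightarrow> complex \<Rightarrow> complex" where
  "Dexpr h1 h2 v z y0 y1 y2 = Dbase h1 h2 (\<Prod>i\<in>{1..8}. v i) z y0 y1 y2
     * (\<Prod>i\<in>{1..8}. Dui h1 h2 (\<Prod>i\<in>{1..8}. v i) z (v i))
     * (\<Prod>i\<in>{1..8}. \<Prod>j\<in>{Suc i..8}. (v i - v j))"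

lemma Dexpr_cong: "(\<And>i. i \<in> {1..8} \<Longrightarrow> v i = w i) \<Longrightarrow> Dexpr h1 h2 v z y0 y1 y2 = Dexpr h1 h2 w z y0 y1 y2"
proof -
  assume a: "\<And>i. i \<in> {1..8} \<Longrightarrow> v i = w i"
  have p: "(\<Prod>i\<in>{1..8}. v i) = (\<Prod>i\<in>{1..8}. w i)" using a by (rule prod.cong[OF refl])
  show ?thesis unfolding Dexpr_def p
    by (intro arg_cong2[where f="(*)"] arg_cong[where f="(*) _"] prod.cong refl) (auto simp: a)
qed

definition Dfun :: "(nat \<Rightarrow> complex) \<Rightarrow> complex" where
  "Dfun x = Dexpr (x 0) (x 1) (\<lambda>i. x (Suc i)) (x 10) (x 11) (x 12) (x 13)"

lemma polyfun_D: "polyfun 14 Dfun"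
proof -
  have "polyfun 14 (\<lambda>x. Dexpr (x 0) (x 1) (\<lambda>i. x (Suc i)) (x 10) (x 11) (x 12) (x 13))"
    unfolding Dexpr_def Dbase_def Dui_def
    by (intro pf_mult pf_sub pf_add pf_pow pf_const pf_prod ballI finite_atLeastAtMost pf_var) auto
  then show ?thesis unfolding Dfun_def[abs_def] .
qed


lemma nz_from: "(P::complex) = E * M \<Longrightarrow> P \<noteq> 0 \<Longrightarrow> E \<noteq> 0" by auto

lemma G_czq:
  fixes h1 h2 z S Q y0 y1 y2 A1 B1 D1 G1 FA FB W V1 R T1 T2 GU U :: complex
  assumes "Q*S = h1^2*h2^2"
  shows "z^2*S-h1^3*h2^2 = (z^2 - h1*Q)*(S)"
  using assms by algebra

lemma G_chq:
  fixes h1 h2 z S Q y0 y1 y2 A1 B1 D1 G1 FA FB W V1 R T1 T2 GU U :: complex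
  assumes "Q*S = h1^2*h2^2"
  shows "(S-h1*h2^3)*h1 = (h1 - Q*h2)*(S)"
  using assms by algebra

lemma G_czq2:
  fixes h1 h2 z S Q y0 y1 y2 A1 B1 D1 G1 FA FB W V1 R T1 T2 GU U :: complex
  assumes "Q*S = h1^2*h2^2"
  shows "z^2*S^2-h1^5*h2^4 = (z^2 - h1*Q^2)*(S^2)"
  using assms by algebra

lemma G_cq1:
  fixes h1 h2 z S Q y0 y1 y2 A1 B1 D1 G1 FA FB W V1 R T1 T2 GU U :: complex
  assumes "Q*S = h1^2*h2^2"
  shows "h1^2*h2^2-S = (Q - 1)*(S)"
  using assms by algebra

lemma G_cta:
  fixes h1 h2 z S Q y0 y1 y2 A1 B1 D1 G1 FA FB W V1 R T1 T2 GU U :: complex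
  assumes "Q*S = h1^2*h2^2" "W*Q = z"
  shows "z^2*S^2-h1^4*h2^5 = (W^2 - h2)*(h1^4*h2^4)"
  using assms by algebra

lemma G_ctb:
  fixes h1 h2 z S Q y0 y1 y2 A1 B1 D1 G1 FA FB W V1 R T1 T2 GU U :: complex
  assumes "V1*z = h1"
  shows "h1^2-h2*z^2 = (V1^2 - h2)*(z^2)"
proof -
  have "(V1^2 - h2)*(z^2) = (V1*z)^2 - h2*z^2" by algebra
  then show ?thesis using assms by simp
qed

lemma G_calbe:
  fixes h1 h2 z S Q y0 y1 y2 A1 B1 D1 G1 FA FB W V1 R T1 T2 GU U :: complex
  assumes "A1*(h1^2*h2^2*z*S) = z^2*S^2+h1^4*h2^5" "B1*(h1*z) = h1^2+h2*z^2"
  shows "z^2*S^2+h1^4*h2^5-h1^3*h2^2*S-h1*h2^3*z^2*S = (A1 - B1)*(h1^2*h2^2*z*S)"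
  using assms by algebra

lemma G_cdeal:
  fixes h1 h2 z S Q y0 y1 y2 A1 B1 D1 G1 FA FB W V1 R T1 T2 GU U :: complex
  assumes "D1*z = z^2+h2" "A1*(h1^2*h2^2*z*S) = z^2*S^2+h1^4*h2^5"
  shows "h1^2*h2^2*S*(z^2+h2)-z^2*S^2-h1^4*h2^5 = (D1 - A1)*(h1^2*h2^2*z*S)"
  using assms by algebra

lemma G_cdebe:
  fixes h1 h2 z S Q y0 y1 y2 A1 B1 D1 G1 FA FB W V1 R T1 T2 GU U :: complex
  assumes "D1*z = z^2+h2" "B1*(h1*z) = h1^2+h2*z^2"
  shows "h1*(z^2+h2)-(h1^2+h2*z^2) = (D1 - B1)*(h1*z)"
  using assms by algebra

lemma G_cgaal:
  fixes h1 h2 z S Q y0 y1 y2 A1 B1 D1 G1 FA FB W V1 R T1 T2 GU U :: complex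
  assumes "G1*(h1^3*h2^2*z*S) = h1^6*h2^4+h2*z^2*S^2" "A1*(h1^2*h2^2*z*S) = z^2*S^2+h1^4*h2^5"
  shows "h1^6*h2^4+h2*z^2*S^2-h1*z^2*S^2-h1^5*h2^5 = (G1 - A1)*(h1^3*h2^2*z*S)"
  using assms by algebra

lemma G_cgabe:
  fixes h1 h2 z S Q y0 y1 y2 A1 B1 D1 G1 FA FB W V1 R T1 T2 GU U :: complex
  assumes "G1*(h1^3*h2^2*z*S) = h1^6*h2^4+h2*z^2*S^2" "B1*(h1*z) = h1^2+h2*z^2"
  shows "h1^6*h2^4+h2*z^2*S^2-h1^2*h2^2*S*(h1^2+h2*z^2) = (G1 - B1)*(h1^3*h2^2*z*S)"
  using assms by algebra

lemma G_cab:
  fixes h1 h2 z S Q y0 y1 y2 A1 B1 D1 G1 FA FB W V1 R T1 T2 GU U :: complex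
  assumes "FA*(h1^2*h2^2*z*S) = z^2*S^2+h1^5*h2^4" "FB*z = z^2+h1"
  shows "z^2*S^2+h1^5*h2^4-h1^2*h2^2*z^2*S-h1^3*h2^2*S = (FA - FB)*(h1^2*h2^2*z*S)"
  using assms by algebra

lemma G_ca4:
  fixes h1 h2 z S Q y0 y1 y2 A1 B1 D1 G1 FA FB W V1 R T1 T2 GU U :: complex
  assumes "FA*(h1^2*h2^2*z*S) = z^2*S^2+h1^5*h2^4"
  shows "(z^2*S^2-h1^5*h2^4)^2 = (FA^2 - 4*h1)*((h1^2*h2^2*z*S)^2)"
  using assms by algebra

lemma G_cb4:
  fixes h1 h2 z S Q y0 y1 y2 A1 B1 D1 G1 FA FB W V1 R T1 T2 GU U :: complex
  assumes "FB*z = z^2+h1"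
  shows "(z^2-h1)^2 = (FB^2 - 4*h1)*(z^2)"
  using assms by algebra

lemma G_cQ1:
  fixes h1 h2 z S Q y0 y1 y2 A1 B1 D1 G1 FA FB W V1 R T1 T2 GU U :: complex
  assumes "T1*(y1-y2) = D1*y1 - B1*y2" "D1*z = z^2+h2" "B1*(h1*z) = h1^2+h2*z^2"
  shows "h1*(z^2+h2)*y1-(h1^2+h2*z^2)*y2 = (T1)*(h1*z*(y1-y2))"
  using assms by algebra

lemma G_cQ1a:
  fixes h1 h2 z S Q y0 y1 y2 A1 B1 D1 G1 FA FB W V1 R T1 T2 GU U :: complex
  assumes "T1*(y1-y2) = D1*y1 - B1*y2" "D1*z = z^2+h2" "B1*(h1*z) = h1^2+h2*z^2" "A1*(h1^2*h2^2*z*S) = z^2*S^2+h1^4*h2^5"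
  shows "h1*h2^2*S*(h1*(z^2+h2)*y1-(h1^2+h2*z^2)*y2)-(z^2*S^2+h1^4*h2^5)*(y1-y2) = (T1 - A1)*(h1^2*h2^2*z*S*(y1-y2))"
  using assms by algebra

lemma G_cQ2:
  fixes h1 h2 z S Q y0 y1 y2 A1 B1 D1 G1 FA FB W V1 R T1 T2 GU U :: complex
  assumes "T2*(y0-y1) = A1*y0 - G1*y1" "A1*(h1^2*h2^2*z*S) = z^2*S^2+h1^4*h2^5" "G1*(h1^3*h2^2*z*S) = h1^6*h2^4+h2*z^2*S^2"
  shows "h1*(z^2*S^2+h1^4*h2^5)*y0-(h1^6*h2^4+h2*z^2*S^2)*y1 = (T2)*(h1^3*h2^2*z*S*(y0-y1))"
  using assms by algebra

lemma G_cQ2b: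
  fixes h1 h2 z S Q y0 y1 y2 A1 B1 D1 G1 FA FB W V1 R T1 T2 GU U :: complex
  assumes "T2*(y0-y1) = A1*y0 - G1*y1" "A1*(h1^2*h2^2*z*S) = z^2*S^2+h1^4*h2^5" "G1*(h1^3*h2^2*z*S) = h1^6*h2^4+h2*z^2*S^2" "B1*(h1*z) = h1^2+h2*z^2"
  shows "h1*(z^2*S^2+h1^4*h2^5)*y0-(h1^6*h2^4+h2*z^2*S^2)*y1-h1^2*h2^2*S*(h1^2+h2*z^2)*(y0-y1) = (T2 - B1)*(h1^3*h2^2*z*S*(y0-y1))"
  using assms by algebra

lemma G_pc:
  fixes h1 h2 z S Q y0 y1 y2 A1 B1 D1 G1 FA FB W V1 R T1 T2 GU U :: complex
  assumes "GU*U = U^2+h2" "A1*(h1^2*h2^2*z*S) = z^2*S^2+h1^4*h2^5"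
  shows "h1^2*h2^2*z*S*(U^2+h2)-U*(z^2*S^2+h1^4*h2^5) = (GU - A1)*(h1^2*h2^2*z*S*U)"
  using assms by algebra

lemma G_pd:
  fixes h1 h2 z S Q y0 y1 y2 A1 B1 D1 G1 FA FB W V1 R T1 T2 GU U :: complex
  assumes "GU*U = U^2+h2" "B1*(h1*z) = h1^2+h2*z^2"
  shows "h1*z*(U^2+h2)-U*(h1^2+h2*z^2) = (GU - B1)*(h1*z*U)"
  using assms by algebra

lemma G_pf:
  fixes h1 h2 z S Q y0 y1 y2 A1 B1 D1 G1 FA FB W V1 R T1 T2 GU U :: complex
  assumes "R*z = h1*Q" "Q*S = h1^2*h2^2"
  shows "U*z*S-h1^3*h2^2 = (U - R)*(z*S)"
  using assms by algebra

lemma gen_of_D: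
  assumes D: "Dexpr h1 h2 u z y0 y1 y2 \<noteq> 0"
  shows "gen h1 h2 u z y0 y1 y2"
proof -
  define S where "S = (\<Prod>i\<in>{1..8}. u i)"
  define Q where "Q = qpar h1 h2 u"
  have base: "Dbase h1 h2 S z y0 y1 y2 \<noteq> 0" using D by (simp add: Dexpr_def S_def)
  note bf = base[unfolded Dbase_def mult_eq_0_iff de_Morgan_disj]
  have pi: "Dui h1 h2 S z (u i) \<noteq> 0" if "i \<in> {1..8}" for i
    using D that by (simp add: Dexpr_def S_def)
  have pr: "u i - u j \<noteq> 0" if "i \<in> {1..8}" "j \<in> {Suc i..8}" for i j
    using D that by (simp add: Dexpr_def)
  have h1: "h1 \<noteq> 0" and h2: "h2 \<noteq> 0" and h12: "h1 - h2 \<noteq> 0" and z0: "z \<noteq> 0"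
    and y0n: "y0 \<noteq> 0" and y1n: "y1 \<noteq> 0" and y2n: "y2 \<noteq> 0" and y01: "y0 - y1 \<noteq> 0" and y12: "y1 - y2 \<noteq> 0"
    and S0: "S \<noteq> 0"
    using bf by blast+
  have un: "\<forall>i\<in>{1..8}. u i \<noteq> 0" using S0 by (simp add: S_def)
  have qe: "Q = h1^2*h2^2/S" by (simp add: Q_def qpar_def S_def)
  have Q0: "Q \<noteq> 0" using h1 h2 S0 by (simp add: qe)
  have FQ: "Q*S = h1^2*h2^2" using S0 by (simp add: qe)
  have Fal: "gP h2 (z/Q)*(h1^2*h2^2*z*S) = z^2*S^2+h1^4*h2^5"
    using h1 h2 z0 S0 unfolding gP_def qe by (simp add: field_simps; algebra?)
  have Fbe: "gP h2 (h1/z)*(h1*z) = h1^2+h2*z^2"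
    using h1 z0 unfolding gP_def by (simp add: field_simps power2_eq_square)
  have Fde: "gP h2 z*z = z^2+h2"
    using z0 unfolding gP_def by (simp add: field_simps power2_eq_square)
  have Fga: "gP h2 (h1*Q/z)*(h1^3*h2^2*z*S) = h1^6*h2^4+h2*z^2*S^2"
    using h1 h2 z0 S0 unfolding gP_def qe by (simp add: field_simps; algebra?)
  have Fa: "fP h1 (z/Q)*(h1^2*h2^2*z*S) = z^2*S^2+h1^5*h2^4"
    using h1 h2 z0 S0 unfolding fP_def qe by (simp add: field_simps; algebra?)
  have Fb: "fP h1 z*z = z^2+h1"
    using z0 unfolding fP_def by (simp add: field_simps power2_eq_square)
  have FW: "(z/Q)*Q = z" using Q0 by simp
  have FV: "(h1/z)*z = h1" using z0 by simp
  have FR: "(h1*Q/z)*z = h1*Q" using z0 by simp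
  have FT1: "((gP h2 z*y1 - gP h2 (h1/z)*y2)/(y1-y2))*(y1-y2) = gP h2 z*y1 - gP h2 (h1/z)*y2"
    using y12 by simp
  have FT2: "((gP h2 (z/Q)*y0 - gP h2 (h1*Q/z)*y1)/(y0-y1))*(y0-y1) = gP h2 (z/Q)*y0 - gP h2 (h1*Q/z)*y1"
    using y01 by simp
  have cq1: "Q \<noteq> 1" using nz_from[OF G_cq1[OF FQ]] bf by auto
  have czq2: "z^2 - h1*Q^2 \<noteq> 0" using nz_from[OF G_czq2[OF FQ]] bf by auto
  have cz1: "z^2 - h1 \<noteq> 0" using bf by blast
  have czq: "z^2 - h1*Q \<noteq> 0" using nz_from[OF G_czq[OF FQ]] bf by auto
  have chq: "h1 - Q*h2 \<noteq> 0"
  proof -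
    have "S-h1*h2^3 \<noteq> 0" using bf by blast
    then show ?thesis using nz_from[OF G_chq[OF FQ]] h1 by auto
  qed
  have cta: "(z/Q)^2 - h2 \<noteq> 0" using nz_from[OF G_cta[OF FQ FW]] bf by auto
  have ctb: "(h1/z)^2 - h2 \<noteq> 0" using nz_from[OF G_ctb[OF FV]] bf by auto
  have cal: "gP h2 (z/Q) \<noteq> 0" using Fal bf by auto
  have cbe: "gP h2 (h1/z) \<noteq> 0" using Fbe bf by auto
  have cde: "gP h2 z \<noteq> 0" using Fde bf by auto
  have cga: "gP h2 (h1*Q/z) \<noteq> 0" using Fga bf by auto
  have calbe: "gP h2 (z/Q) \<noteq> gP h2 (h1/z)" using nz_from[OF G_calbe[OF Fal Fbe]] bf by auto
  have cdeal: "gP h2 z \<noteq> gP h2 (z/Q)" using nz_from[OF G_cdeal[OF Fde Fal]] bf by auto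
  have cdebe: "gP h2 z \<noteq> gP h2 (h1/z)" using nz_from[OF G_cdebe[OF Fde Fbe]] bf by auto
  have cgaal: "gP h2 (h1*Q/z) \<noteq> gP h2 (z/Q)" using nz_from[OF G_cgaal[OF Fga Fal]] bf by auto
  have cgabe: "gP h2 (h1*Q/z) \<noteq> gP h2 (h1/z)" using nz_from[OF G_cgabe[OF Fga Fbe]] bf by auto
  have cab: "fP h1 (z/Q) \<noteq> fP h1 z" using nz_from[OF G_cab[OF Fa Fb]] bf by auto
  have ca4: "(fP h1 (z/Q))^2 - 4*h1 \<noteq> 0"
  proof -
    have "z^2*S^2-h1^5*h2^4 \<noteq> 0" using bf by blast
    then show ?thesis using nz_from[OF G_ca4[OF Fa]] by auto
  qed
  have cb4: "(fP h1 z)^2 - 4*h1 \<noteq> 0"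
  proof -
    have "z^2-h1 \<noteq> 0" using bf by blast
    then show ?thesis using nz_from[OF G_cb4[OF Fb]] by auto
  qed
  have cQ1: "(gP h2 z*y1 - gP h2 (h1/z)*y2)/(y1-y2) \<noteq> 0"
    using nz_from[OF G_cQ1[OF FT1 Fde Fbe]] bf by auto
  have cQ1a: "(gP h2 z*y1 - gP h2 (h1/z)*y2)/(y1-y2) \<noteq> gP h2 (z/Q)"
    using nz_from[OF G_cQ1a[OF FT1 Fde Fbe Fal]] bf by auto
  have cQ2: "(gP h2 (z/Q)*y0 - gP h2 (h1*Q/z)*y1)/(y0-y1) \<noteq> 0"
    using nz_from[OF G_cQ2[OF FT2 Fal Fga]] bf by auto
  have cQ2b: "(gP h2 (z/Q)*y0 - gP h2 (h1*Q/z)*y1)/(y0-y1) \<noteq> gP h2 (h1/z)"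
    using nz_from[OF G_cQ2b[OF FT2 Fal Fga Fbe]] bf by auto
  have cui: "\<forall>i\<in>{1..8}. (u i)^2 - h2 \<noteq> 0 \<and> gP h2 (u i) \<noteq> 0
       \<and> gP h2 (u i) \<noteq> gP h2 (z/Q) \<and> gP h2 (u i) \<noteq> gP h2 (h1/z)
       \<and> u i \<noteq> z \<and> u i \<noteq> h1*Q/z"
  proof
    fix i assume i: "i \<in> {1..8::nat}"
    note bi = pi[OF i, unfolded Dui_def mult_eq_0_iff de_Morgan_disj]
    have ui: "u i \<noteq> 0" using un i by blast
    have Fu: "gP h2 (u i)*u i = u i^2 + h2" using ui unfolding gP_def by (simp add: field_simps power2_eq_square)
    have a: "(u i)^2 - h2 \<noteq> 0" "u i - z \<noteq> 0" using bi by blast+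
    have b: "gP h2 (u i) \<noteq> 0" using Fu bi by auto
    have c: "gP h2 (u i) \<noteq> gP h2 (z/Q)" using nz_from[OF G_pc[OF Fu Fal]] bi by auto
    have d: "gP h2 (u i) \<noteq> gP h2 (h1/z)" using nz_from[OF G_pd[OF Fu Fbe]] bi by auto
    have f: "u i \<noteq> h1*Q/z" using nz_from[OF G_pf[OF FR FQ]] bi by auto
    show "(u i)^2 - h2 \<noteq> 0 \<and> gP h2 (u i) \<noteq> 0
       \<and> gP h2 (u i) \<noteq> gP h2 (z/Q) \<and> gP h2 (u i) \<noteq> gP h2 (h1/z)
       \<and> u i \<noteq> z \<and> u i \<noteq> h1*Q/z" using a b c d f by simp
  qed
  have cinj: "\<forall>i\<in>{1..8}. \<forall>j\<in>{1..8}. i \<noteq> j \<longrightarrow> u i \<noteq> u j"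
  proof (intro ballI impI)
    fix i j :: nat assume i: "i \<in> {1..8}" and j: "j \<in> {1..8}" and ij: "i \<noteq> j"
    show "u i \<noteq> u j"
    proof (cases "i < j")
      case True then show ?thesis using pr[OF i, of j] j by auto
    next
      case False then have "j < i" using ij by simp
      then show ?thesis using pr[OF j, of i] i by auto
    qed
  qed
  have h12': "h1 \<noteq> h2" "y0 \<noteq> y1" "y1 \<noteq> y2" using h12 y01 y12 by auto
  show ?thesis
    unfolding gen_def
    using h1 h2 h12' z0 y0n y1n y2n un cq1 czq2 cz1 czq chq cta ctb cal cbe calbe cde cdeal cdebe
      cga cgaal cgabe cab ca4 cb4 cui cinj cQ1 cQ1a cQ2 cQ2b
    unfolding Q_def by blast
qed


lemma set8: "{1..8::nat} = {1,2,3,4,5,6,7,8}" by (auto simp: numeral_eq_Suc)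
lemma S_val: "(\<Prod>i\<in>{1..8::nat}. (of_nat i + 1 :: complex)) = 362880"
  unfolding set8 by simp

lemma D_nonzero: "Dexpr 3 2 (\<lambda>i. of_nat i + 1) (-3) 5 3 (-1) \<noteq> 0"
proof -
  have b: "Dbase 3 2 362880 (-3) 5 3 (-1) \<noteq> 0" by (simp add: Dbase_def)
  have p: "\<forall>i\<in>{1..8::nat}. Dui 3 2 362880 (-3) (of_nat i + 1) \<noteq> 0"
    unfolding set8 by (simp add: Dui_def)
  have q: "(\<Prod>i\<in>{1..8::nat}. \<Prod>j\<in>{Suc i..8}. ((of_nat i + 1 :: complex) - (of_nat j + 1))) \<noteq> 0"
  proof -
    have "(of_nat i + 1 :: complex) - (of_nat j + 1) \<noteq> 0" if "j \<in> {Suc i..8}" for i j :: nat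
      using that by simp
    then show ?thesis by (simp add: prod_zero_iff)
  qed
  show ?thesis unfolding Dexpr_def S_val using b p q by (simp add: prod_zero_iff)
qed

lemma Dfun_pv: "Dfun (param_vec h1 h2 u z y0 y1 y2) = Dexpr h1 h2 u z y0 y1 y2"
proof -
  have "Dfun (param_vec h1 h2 u z y0 y1 y2) = Dexpr h1 h2 (\<lambda>i. param_vec h1 h2 u z y0 y1 y2 (Suc i)) z y0 y1 y2"
    unfolding Dfun_def by (simp add: param_vec_def)
  also have "\<dots> = Dexpr h1 h2 u z y0 y1 y2"
    by (rule Dexpr_cong) (auto simp: param_vec_def)
  finally show ?thesis .
qed

theorem proposition1:
  "\<exists>D. polyfun 14 D \<and> (\<exists>x. D x \<noteq> 0) \<and>
    (\<forall>h1 h2 (u :: nat \<Rightarrow> complex) z y0 y1 y2.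
       D (param_vec h1 h2 u z y0 y1 y2) \<noteq> 0 \<longrightarrow>
       (\<exists>c. in_box32 c \<and> (\<exists>j. c 3 j \<noteq> 0) \<and> (\<exists>i. c i 2 \<noteq> 0)
          \<and> (\<forall>f g. g \<noteq> 0 \<and> phi h1 h2 f g \<noteq> 0
                   \<and> f \<noteq> fP h1 (z / qpar h1 h2 u) \<and> f \<noteq> fP h1 z
                   \<and> g \<noteq> gP h2 (z / qpar h1 h2 u) \<and> g \<noteq> gP h2 (h1 / z)
                   \<longrightarrow> Fcurve h1 h2 u z y0 y1 y2 f g = bipoly c f g)
          \<and> through12 h1 h2 u z y0 y1 y2 c
          \<and> (\<forall>d. in_box32 d \<and> through12 h1 h2 u z y0 y1 y2 d
                 \<longrightarrow> (\<exists>s. \<forall>i j. d i j = s * c i j))))"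
proof (intro exI[of _ Dfun] conjI allI impI)
  show "polyfun 14 Dfun" by (rule polyfun_D)
  show "\<exists>x. Dfun x \<noteq> 0"
    using D_nonzero Dfun_pv[of 3 2 "\<lambda>i. of_nat i + 1" "-3" 5 3 "-1"] by metis
next
  fix h1 h2 :: complex and u :: "nat \<Rightarrow> complex" and z y0 y1 y2 :: complex
  assume "Dfun (param_vec h1 h2 u z y0 y1 y2) \<noteq> 0"
  then have "gen h1 h2 u z y0 y1 y2" using gen_of_D Dfun_pv by metis
  then show "\<exists>c. in_box32 c \<and> (\<exists>j. c 3 j \<noteq> 0) \<and> (\<exists>i. c i 2 \<noteq> 0)
          \<and> (\<forall>f g. g \<noteq> 0 \<and> phi h1 h2 f g \<noteq> 0
                   \<and> f \<noteq> fP h1 (z / qpar h1 h2 u) \<and> f \<noteq> fP h1 z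
                   \<and> g \<noteq> gP h2 (z / qpar h1 h2 u) \<and> g \<noteq> gP h2 (h1 / z)
                   \<longrightarrow> Fcurve h1 h2 u z y0 y1 y2 f g = bipoly c f g)
          \<and> through12 h1 h2 u z y0 y1 y2 c
          \<and> (\<forall>d. in_box32 d \<and> through12 h1 h2 u z y0 y1 y2 d
                 \<longrightarrow> (\<exists>s. \<forall>i j. d i j = s * c i j))"
    by (rule gen.main)
qed

end
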